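(* Under the standing assumptions below, let $\kappa>0$, $\tau\ge L_{\nabla P_\rho}+\kappa$, $\alpha_y\in(0,1/(L_{\nabla P_\rho}+\tau))$, $\alpha_x\in(0,1/L_{\nabla\vartheta})$, and let the iterates be generated by PG-MAD. Then for $k=0,\dots,K-1$, with $w^k=(x^k,z^k,u^k,v^k)$, $$\frac{1-\alpha_xL_{\nabla\vartheta}}{4\alpha_x}\|w^{k+1}-w^k\|^2\le\vartheta(w^k)-\vartheta(w^{k+1})+\frac{2\alpha_x(L_{\nabla f}^2+\rho^2L_{\nabla g}^2+\tau^2)}{\kappa(1-\alpha_xL_{\nabla\vartheta})}(1-\kappa\alpha_y)^T\Delta_k.$$
   Context: Standing setting. $\mathcal X\subset\mathbb R^{d_x}$, $\mathcal Y\subset\mathbb R^{d_y}$, $\Lambda\subset\mathbb R^{d_\lambda}$ are nonempty convex compact sets. $f(x,y,\lambda):=\bar f(x,y)+\lambda^T(Ax+By-c)$ with $\bar f$ continuously differentiable; $L_{\nabla f}>0$ is a Lipschitz constant of $\nabla f$ on $\mathcal X\times\mathcal Y\times\Lambda$. $g$ is continuously differentiable, $\nabla g$ is $L_{\nabla g}$-Lipschitz on $\mathcal Y\times\Lambda$, $g(\cdot,\lambda)$ is convex for each $\lambda\in\Lambda$, and $g$ has a saddle point $(z^*,\lambda^* )\in\mathcal Y\times\Lambda$: $g(z^*,\lambda^* )=\max_{\lambda\in\Lambda}\min_{z\in\mathcal Y}g(z,\lambda)=\min_{z\in\mathcal Y}\max_{\lambda\in\Lambda}g(z,\lambda)$.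 For $\rho>0$: $P_\rho(x,y,\lambda,z):=f(x,y,\lambda)-\rho(g(y,\lambda)-g(z,\lambda))$, $L_{\nabla P_\rho}:=L_{\nabla f}+2\rho L_{\nabla g}$; $Q(x,z,u,v,y,\lambda):=P_\rho(x,y,\lambda,z)-\frac\tau2\|(y,\lambda)-(u,v)\|^2$; $\vartheta(x,z,u,v):=\max_{y\in\mathcal Y,\lambda\in\Lambda}Q(x,z,u,v,y,\lambda)$; $L_{\nabla\vartheta}:=(L_{\nabla f}+\rho L_{\nabla g}+2\tau)(1+(L_{\nabla P_\rho}+\tau)\kappa^{-1})$. $\mathrm{proj}_C$ is Euclidean projection; $\nabla_1g$ is the gradient of $g$ in its first argument. PG-MAD: given $\rho,\kappa>0$, $\tau\ge L_{\nabla P_\rho}+\kappa$, $\alpha_x,\alpha_y>0$, integers $T,K>1$, and $x^0\in\mathcal X$, $z^0,y^0\in\mathcal Y$, $\lambda^0\in\Lambda$, $u^0\in\mathbb R^{d_y}$, $v^0\in\mathbb R^{d_\lambda}$: for $k=0,\dots,K-1$, set $(y^{[0]}(k),\lambda^{[0]}(k))=(y^k,\lambda^k)$; for $t=0,\dots,T-1$, $y^{[t+1]}(k)=\mathrm{proj}_{\mathcal Y}[y^{[t]}(k)+\alpha_y\nabla_yQ(x^k,z^k,u^k,v^k,y^{[t]}(k),\lambda^{[t]}(k))]$, $\lambda^{[t+1]}(k)=\mathrm{proj}_{\Lambda}[\lambda^{[t]}(k)+\alpha_y\nabla_\lambda Q(x^k,z^k,u^k,v^k,y^{[t]}(k),\lambda^{[t]}(k))]$;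 set $(y^{k+1},\lambda^{k+1})=(y^{[T]}(k),\lambda^{[T]}(k))$; then $x^{k+1}=\mathrm{proj}_{\mathcal X}[x^k-\alpha_x\nabla_xf(x^k,y^{k+1},\lambda^{k+1})]$, $z^{k+1}=\mathrm{proj}_{\mathcal Y}[z^k-\alpha_x\rho\nabla_1g(z^k,\lambda^{k+1})]$, $u^{k+1}=(1+\alpha_x\tau)u^k-\alpha_x\tau y^{k+1}$, $v^{k+1}=(1+\alpha_x\tau)v^k-\alpha_x\tau\lambda^{k+1}$. Notation: $Q^{(k)}(y,\lambda):=Q(x^k,z^k,u^k,v^k,y,\lambda)$; $\Delta_k:=\vartheta(x^k,z^k,u^k,v^k)-Q^{(k)}(y^k,\lambda^k)$. *)

theory Defs
  imports "HOL-Analysis.Analysis"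
begin

definition grad :: "('a::euclidean_space \<Rightarrow> real) \<Rightarrow> 'a \<Rightarrow> 'a" where
  "grad F p = (SOME v. (F has_derivative (\<lambda>h. v \<bullet> h)) (at p))"

definition cont_diff :: "('a::euclidean_space \<Rightarrow> real) \<Rightarrow> bool" where
  "cont_diff F \<longleftrightarrow> (\<forall>p. F differentiable (at p)) \<and> continuous_on UNIV (grad F)"

definition fobj :: "('x::euclidean_space \<times> 'y::euclidean_space \<Rightarrow> real) \<Rightarrow> ('x \<Rightarrow> 'l::euclidean_space)
   \<Rightarrow> ('y \<Rightarrow> 'l) \<Rightarrow> 'l \<Rightarrow> 'x \<times> 'y \<times> 'l \<Rightarrow> real" where
  "fobj fbar A B c p = fbar (fst p, fst (snd p)) + snd (snd p) \<bullet> (A (fst p) + B (fst (snd p)) - c)"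

definition Prho :: "('x::euclidean_space \<times> 'y::euclidean_space \<Rightarrow> real) \<Rightarrow> ('x \<Rightarrow> 'l::euclidean_space)
   \<Rightarrow> ('y \<Rightarrow> 'l) \<Rightarrow> 'l \<Rightarrow> ('y \<times> 'l \<Rightarrow> real) \<Rightarrow> real \<Rightarrow> 'x \<Rightarrow> 'y \<Rightarrow> 'l \<Rightarrow> 'y \<Rightarrow> real" where
  "Prho fbar A B c g \<rho> x y l z = fobj fbar A B c (x, y, l) - \<rho> * (g (y, l) - g (z, l))"

definition Qfun :: "('x::euclidean_space \<times> 'y::euclidean_space \<Rightarrow> real) \<Rightarrow> ('x \<Rightarrow> 'l::euclidean_space)
   \<Rightarrow> ('y \<Rightarrow> 'l) \<Rightarrow> 'l \<Rightarrow> ('y \<times> 'l \<Rightarrow> real) \<Rightarrow> real \<Rightarrow> real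
   \<Rightarrow> 'x \<Rightarrow> 'y \<Rightarrow> 'y \<Rightarrow> 'l \<Rightarrow> 'y \<Rightarrow> 'l \<Rightarrow> real" where
  "Qfun fbar A B c g \<rho> \<tau> x z u v y l =
     Prho fbar A B c g \<rho> x y l z - \<tau> / 2 * (norm ((y, l) - (u, v)))\<^sup>2"

definition vartheta :: "('x::euclidean_space \<times> 'y::euclidean_space \<Rightarrow> real) \<Rightarrow> ('x \<Rightarrow> 'l::euclidean_space)
   \<Rightarrow> ('y \<Rightarrow> 'l) \<Rightarrow> 'l \<Rightarrow> ('y \<times> 'l \<Rightarrow> real) \<Rightarrow> real \<Rightarrow> real \<Rightarrow> 'y set \<Rightarrow> 'l set
   \<Rightarrow> 'x \<times> 'y \<times> 'y \<times> 'l \<Rightarrow> real" where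
  "vartheta fbar A B c g \<rho> \<tau> Y \<Lambda> w =
     (SUP p \<in> Y \<times> \<Lambda>. Qfun fbar A B c g \<rho> \<tau> (fst w) (fst (snd w)) (fst (snd (snd w)))
                         (snd (snd (snd w))) (fst p) (snd p))"

end

theory Submission
  imports Defs
begin

lemma linear_functional_inner:
  fixes D :: "'a::euclidean_space \<Rightarrow> real"
  assumes "linear D"
  shows "D = (\<lambda>h. (\<Sum>b\<in>Basis. D b *\<^sub>R b) \<bullet> h)"
proof
  fix h
  have "D h = D (\<Sum>b\<in>Basis. (h \<bullet> b) *\<^sub>R b)" by (simp add: euclidean_representation)
  also have "\<dots> = (\<Sum>b\<in>Basis. (h \<bullet> b) * D b)"
    using assms by (simp add: linear_sum linear_scale)
  also have "\<dots> = (\<Sum>b\<in>Basis. D b *\<^sub>R b) \<bullet> h"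
    by (simp add: inner_sum_right inner_commute mult.commute)
  finally show "D h = (\<Sum>b\<in>Basis. D b *\<^sub>R b) \<bullet> h" .
qed

lemma grad_has_derivative:
  fixes F :: "'a::euclidean_space \<Rightarrow> real"
  assumes "F differentiable (at p)"
  shows "(F has_derivative (\<lambda>h. grad F p \<bullet> h)) (at p)"
proof -
  obtain D where D: "(F has_derivative D) (at p)" using assms by (auto simp: differentiable_def)
  then have "linear D" using has_derivative_linear by blast
  then have "D = (\<lambda>h. (\<Sum>b\<in>Basis. D b *\<^sub>R b) \<bullet> h)" by (rule linear_functional_inner)
  with D have "\<exists>v. (F has_derivative (\<lambda>h. v \<bullet> h)) (at p)" by metis
  then show ?thesis unfolding grad_def by (rule someI_ex)
qed

lemma grad_eqI:
  fixes F :: "'a::euclidean_space \<Rightarrow> real"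
  assumes "(F has_derivative (\<lambda>h. v \<bullet> h)) (at p)"
  shows "grad F p = v"
proof -
  have "(F has_derivative (\<lambda>h. grad F p \<bullet> h)) (at p)"
    using assms by (intro grad_has_derivative) (auto simp: differentiable_def)
  from has_derivative_unique[OF this assms]
  have "(\<lambda>h. grad F p \<bullet> h) = (\<lambda>h. v \<bullet> h)" .
  then have "grad F p \<bullet> (grad F p - v) = v \<bullet> (grad F p - v)" by metis
  then have "(grad F p - v) \<bullet> (grad F p - v) = 0" by (simp add: inner_diff_left)
  then show ?thesis by simp
qed

lemma quad_bound:
  fixes h h' :: "real \<Rightarrow> real"
  assumes der: "\<And>s. 0 \<le> s \<Longrightarrow> s \<le> 1 \<Longrightarrow> (h has_real_derivative h' s) (at s)"
    and bd: "\<And>s. 0 \<le> s \<Longrightarrow> s \<le> 1 \<Longrightarrow> h' s - h' 0 \<le> C * s"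
  shows "h 1 - h 0 \<le> h' 0 + C / 2"
proof -
  define \<phi> where "\<phi> s = h s - s * h' 0 - C * s\<^sup>2 / 2" for s
  have "\<And>s. 0 \<le> s \<Longrightarrow> s \<le> 1 \<Longrightarrow> (\<phi> has_real_derivative (h' s - h' 0 - C * s)) (at s)"
    unfolding \<phi>_def
    by (rule derivative_eq_intros der refl | simp)+
  from MVT2[of 0 1 \<phi>, OF _ this] obtain \<xi> where \<xi>: "0 < \<xi>" "\<xi> < 1"
    "\<phi> 1 - \<phi> 0 = (1 - 0) * (h' \<xi> - h' 0 - C * \<xi>)" by auto
  with bd[of \<xi>] have "\<phi> 1 - \<phi> 0 \<le> 0" by auto
  then show ?thesis unfolding \<phi>_def by simp
qed

lemma mvt_le:
  fixes h h' :: "real \<Rightarrow> real"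
  assumes der: "\<And>s. 0 \<le> s \<Longrightarrow> s \<le> 1 \<Longrightarrow> (h has_real_derivative h' s) (at s)"
    and bd: "\<And>s. 0 \<le> s \<Longrightarrow> s \<le> 1 \<Longrightarrow> h' s \<le> B"
  shows "h 1 - h 0 \<le> B"
proof -
  from MVT2[of 0 1 h, OF _ der] obtain \<xi> where \<xi>: "0 < \<xi>" "\<xi> < 1"
    "h 1 - h 0 = (1 - 0) * h' \<xi>" by auto
  with bd[of \<xi>] show ?thesis by auto
qed

locale pgm =
  fixes X :: "'x::euclidean_space set" and Y :: "'y::euclidean_space set"
    and \<Lambda> :: "'l::euclidean_space set"
    and fbar :: "'x \<times> 'y \<Rightarrow> real" and A :: "'x \<Rightarrow> 'l" and B :: "'y \<Rightarrow> 'l" and c :: 'l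
    and g :: "'y \<times> 'l \<Rightarrow> real"
    and Lf Lg \<rho> \<kappa> \<tau> :: real
  assumes X: "X \<noteq> {}" "convex X" "closed X"
    and Y: "Y \<noteq> {}" "convex Y" "closed Y" "compact Y"
    and Lam: "\<Lambda> \<noteq> {}" "convex \<Lambda>" "closed \<Lambda>" "compact \<Lambda>"
    and linA: "linear A" and linB: "linear B"
    and fbar_C1: "cont_diff fbar"
    and Lf_lip: "Lf-lipschitz_on (X \<times> Y \<times> \<Lambda>) (grad (fobj fbar A B c))"
    and g_C1: "cont_diff g"
    and Lg_lip: "Lg-lipschitz_on (Y \<times> \<Lambda>) (grad g)"
    and rho_pos: "\<rho> > 0" and kappa_pos: "\<kappa> > 0"
    and tau: "\<tau> \<ge> Lf + 2 * \<rho> * Lg + \<kappa>"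
begin

definition "F = fobj fbar A B c"

definition Qj :: "('x \<times> 'y \<times> 'y \<times> 'l) \<times> ('y \<times> 'l) \<Rightarrow> real" where
  "Qj W = F (fst (fst W), snd W) - \<rho> * (g (snd W) - g (fst (snd (fst W)), snd (snd W)))
     - \<tau> / 2 * ((snd W - snd (snd (fst W))) \<bullet> (snd W - snd (snd (fst W))))"

definition gw :: "('x \<times> 'y \<times> 'y \<times> 'l) \<times> ('y \<times> 'l) \<Rightarrow> 'x \<times> 'y \<times> 'y \<times> 'l" where
  "gw W = (fst (grad F (fst (fst W), snd W)),
           \<rho> *\<^sub>R fst (grad g (fst (snd (fst W)), snd (snd W))),
           \<tau> *\<^sub>R (snd W - snd (snd (fst W))))"

definition gp :: "('x \<times> 'y \<times> 'y \<times> 'l) \<times> ('y \<times> 'l) \<Rightarrow> 'y \<times> 'l" where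
  "gp W = snd (grad F (fst (fst W), snd W)) - \<rho> *\<^sub>R grad g (snd W)
          + \<rho> *\<^sub>R (0, snd (grad g (fst (snd (fst W)), snd (snd W))))
          - \<tau> *\<^sub>R (snd W - snd (snd (fst W)))"

lemma Qfun_eq: "Qfun fbar A B c g \<rho> \<tau> x z u v y l = Qj ((x, z, u, v), (y, l))"
  by (simp add: Qfun_def Prho_def Qj_def F_def power2_norm_eq_inner)

lemma hasg: "(g has_derivative (\<lambda>h. grad g q \<bullet> h)) (at q)"
  using g_C1 by (intro grad_has_derivative) (metis cont_diff_def prod.collapse)

lemma hasF: "(F has_derivative (\<lambda>h. grad F q \<bullet> h)) (at q)"
proof (rule grad_has_derivative)
  have bA: "bounded_linear A" "bounded_linear B" using linA linB by (simp_all add: linear_conv_bounded_linear)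
  have fb: "(fbar has_derivative (\<lambda>h. grad fbar p \<bullet> h)) (at p)" for p
    using fbar_C1 unfolding cont_diff_def by (intro grad_has_derivative) (metis prod.collapse)
  have "((\<lambda>q. fbar (fst q, fst (snd q))) has_derivative
     (\<lambda>h. grad fbar (fst q, fst (snd q)) \<bullet> (fst h, fst (snd h)))) (at q)"
    by (rule has_derivative_compose[OF _ fb]) (auto intro!: derivative_eq_intros)
  moreover have "((\<lambda>q. snd (snd q) \<bullet> (A (fst q) + B (fst (snd q)) - c)) has_derivative
     (\<lambda>h. snd (snd q) \<bullet> (A (fst h) + B (fst (snd h))) + snd (snd h) \<bullet> (A (fst q) + B (fst (snd q)) - c))) (at q)"
    by (auto intro!: derivative_eq_intros bounded_linear.has_derivative[OF bA(1)]
        bounded_linear.has_derivative[OF bA(2)])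
  ultimately have "((\<lambda>q. fbar (fst q, fst (snd q)) + snd (snd q) \<bullet> (A (fst q) + B (fst (snd q)) - c))
      has_derivative (\<lambda>h. grad fbar (fst q, fst (snd q)) \<bullet> (fst h, fst (snd h)) +
        (snd (snd q) \<bullet> (A (fst h) + B (fst (snd h))) + snd (snd h) \<bullet> (A (fst q) + B (fst (snd q)) - c)))) (at q)"
    by (rule has_derivative_add)
  then show "F differentiable (at q)" unfolding differentiable_def F_def fobj_def[abs_def] by blast
qed

definition gj where "gj W = (gw W, gp W)"

lemma hasQj: "(Qj has_derivative (\<lambda>H. gj W \<bullet> H)) (at W)"
proof -
  have d1: "((\<lambda>W. F (fst (fst W), snd W)) has_derivative
      (\<lambda>H. grad F (fst (fst W), snd W) \<bullet> (fst (fst H), snd H))) (at W)"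
    by (rule has_derivative_compose[OF _ hasF]) (auto intro!: derivative_eq_intros)
  have d2: "((\<lambda>W. g (snd W)) has_derivative (\<lambda>H. grad g (snd W) \<bullet> snd H)) (at W)"
    by (rule has_derivative_compose[OF _ hasg]) (auto intro!: derivative_eq_intros)
  have d3: "((\<lambda>W. g (fst (snd (fst W)), snd (snd W))) has_derivative
     (\<lambda>H. grad g (fst (snd (fst W)), snd (snd W)) \<bullet> (fst (snd (fst H)), snd (snd H)))) (at W)"
    by (rule has_derivative_compose[OF _ hasg]) (auto intro!: derivative_eq_intros)
  have d4: "((\<lambda>W. (snd W - snd (snd (fst W))) \<bullet> (snd W - snd (snd (fst W)))) has_derivative
     (\<lambda>H. 2 * ((snd W - snd (snd (fst W))) \<bullet> (snd H - snd (snd (fst H)))))) (at W)"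
    by (auto intro!: derivative_eq_intros simp: inner_commute)
  have "(Qj has_derivative (\<lambda>H. grad F (fst (fst W), snd W) \<bullet> (fst (fst H), snd H)
     - \<rho> * (grad g (snd W) \<bullet> snd H - grad g (fst (snd (fst W)), snd (snd W)) \<bullet> (fst (snd (fst H)), snd (snd H)))
     - \<tau> / 2 * (2 * ((snd W - snd (snd (fst W))) \<bullet> (snd H - snd (snd (fst H))))))) (at W)"
    unfolding Qj_def
    by (intro has_derivative_diff has_derivative_mult_right d1 d2 d3 d4)
  then show ?thesis
    by (rule has_derivative_eq_rhs)
       (auto simp: fun_eq_iff gj_def gw_def gp_def inner_diff_left inner_diff_right inner_add_left
         inner_Pair_0 inner_prod_def algebra_simps)
qed

end

context pgm begin

abbreviation "S \<equiv> Y \<times> \<Lambda>"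
abbreviation "LP \<equiv> Lf + 2 * \<rho> * Lg"

lemma Lf_nn: "Lf \<ge> 0" using Lf_lip by (simp add: lipschitz_on_def)
lemma Lg_nn: "Lg \<ge> 0" using Lg_lip by (simp add: lipschitz_on_def)

lemma S_props: "S \<noteq> {}" "convex S" "closed S" "compact S"
  using Y Lam by (auto intro: convex_Times closed_Times compact_Times)

lemma lipF: "a \<in> X \<times> Y \<times> \<Lambda> \<Longrightarrow> b \<in> X \<times> Y \<times> \<Lambda> \<Longrightarrow> norm (grad F a - grad F b) \<le> Lf * norm (a - b)"
  using Lf_lip unfolding lipschitz_on_def F_def dist_norm by blast

lemma lipg: "a \<in> S \<Longrightarrow> b \<in> S \<Longrightarrow> norm (grad g a - grad g b) \<le> Lg * norm (a - b)"
  using Lg_lip unfolding lipschitz_on_def dist_norm by blast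

lemma dir_deriv: "((\<lambda>s. Qj (W + s *\<^sub>R D)) has_real_derivative (gj (W + s *\<^sub>R D) \<bullet> D)) (at s)"
proof -
  have "((\<lambda>s. Qj (W + s *\<^sub>R D)) has_derivative (\<lambda>t. gj (W + s *\<^sub>R D) \<bullet> (t *\<^sub>R D))) (at s)"
    by (rule has_derivative_compose[OF _ hasQj]) (auto intro!: derivative_eq_intros)
  then show ?thesis unfolding has_field_derivative_def
    by (rule has_derivative_eq_rhs) (auto simp: fun_eq_iff)
qed

lemma grad_Qp: "grad (\<lambda>p. Qj (w, p)) q = gp (w, q)"
proof (rule grad_eqI)
  have "((\<lambda>p. Qj (w, p)) has_derivative (\<lambda>h. gj (w, q) \<bullet> (0, h))) (at q)"
    by (rule has_derivative_compose[OF _ hasQj]) (auto intro!: derivative_eq_intros)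
  then show "((\<lambda>p. Qj (w, p)) has_derivative (\<lambda>h. gp (w, q) \<bullet> h)) (at q)"
    by (rule has_derivative_eq_rhs) (auto simp: fun_eq_iff gj_def)
qed

lemma norm_triple: "norm (a, b, d) \<le> norm a + norm b + norm d"
  by (metis add.assoc add_left_mono norm_Pair_le order_trans)

lemma gp_diff_p:
  assumes "x \<in> X" "z \<in> Y" "p \<in> S" "p' \<in> S"
  shows "norm (gp ((x, z, uv), p) - gp ((x, z, uv), p') + \<tau> *\<^sub>R (p - p')) \<le> LP * norm (p - p')"
proof -
  obtain y l where p: "p = (y, l)" by force
  obtain y' l' where p': "p' = (y', l')" by force
  have e: "gp ((x, z, uv), p) - gp ((x, z, uv), p') + \<tau> *\<^sub>R (p - p') =
     (snd (grad F (x, p)) - snd (grad F (x, p'))) - \<rho> *\<^sub>R (grad g p - grad g p')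
     + \<rho> *\<^sub>R (0, snd (grad g (z, l)) - snd (grad g (z, l')))"
    by (simp add: gp_def p p' algebra_simps)
  have n1: "norm (snd (grad F (x, p)) - snd (grad F (x, p'))) \<le> Lf * norm (p - p')"
  proof -
    have "norm (snd (grad F (x, p)) - snd (grad F (x, p'))) \<le> norm (grad F (x, p) - grad F (x, p'))"
      by (metis norm_snd_le prod.collapse snd_diff)
    also have "\<dots> \<le> Lf * norm ((x, p) - (x, p'))" using assms by (intro lipF) auto
    finally show ?thesis by simp
  qed
  have n2: "norm (\<rho> *\<^sub>R (grad g p - grad g p')) \<le> \<rho> * Lg * norm (p - p')"
    using lipg[OF assms(3,4)] rho_pos by (simp add: mult_left_mono mult.assoc)
  have n3: "norm (\<rho> *\<^sub>R ((0::'y), snd (grad g (z, l)) - snd (grad g (z, l')))) \<le> \<rho> * Lg * norm (p - p')"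
  proof -
    have "norm (snd (grad g (z, l)) - snd (grad g (z, l'))) \<le> norm (grad g (z, l) - grad g (z, l'))"
      by (metis norm_snd_le prod.collapse snd_diff)
    also have "\<dots> \<le> Lg * norm ((z, l) - (z, l'))" using assms p p' by (intro lipg) auto
    also have "norm ((z, l) - (z, l')) \<le> norm (p - p')" using p p' by (simp add: norm_snd_le)
    finally have "norm (snd (grad g (z, l)) - snd (grad g (z, l'))) \<le> Lg * norm (p - p')"
      using Lg_nn by (meson order_trans mult_left_mono)
    then show ?thesis using rho_pos by (simp add: mult_left_mono mult.assoc)
  qed
  have "norm (gp ((x, z, uv), p) - gp ((x, z, uv), p') + \<tau> *\<^sub>R (p - p')) \<le>
      norm (snd (grad F (x, p)) - snd (grad F (x, p'))) + norm (\<rho> *\<^sub>R (grad g p - grad g p'))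
      + norm (\<rho> *\<^sub>R ((0::'y), snd (grad g (z, l)) - snd (grad g (z, l'))))"
    unfolding e by (meson add_mono_thms_linordered_semiring(3) norm_triangle_ineq norm_triangle_ineq4 order_trans)
  also have "\<dots> \<le> Lf * norm (p - p') + \<rho> * Lg * norm (p - p') + \<rho> * Lg * norm (p - p')"
    using n1 n2 n3 by linarith
  finally show ?thesis by (simp add: algebra_simps)
qed

lemma gp_mono:
  assumes "x \<in> X" "z \<in> Y" "p \<in> S" "p' \<in> S"
  shows "(gp ((x, z, uv), p) - gp ((x, z, uv), p')) \<bullet> (p - p') \<le> - \<kappa> * (norm (p - p'))\<^sup>2"
    and "(gp ((x, z, uv), p) - gp ((x, z, uv), p')) \<bullet> (p - p') \<ge> - (LP + \<tau>) * (norm (p - p'))\<^sup>2"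
proof -
  define V where "V = gp ((x, z, uv), p) - gp ((x, z, uv), p') + \<tau> *\<^sub>R (p - p')"
  have V: "norm V \<le> LP * norm (p - p')" unfolding V_def by (rule gp_diff_p[OF assms])
  have e: "(gp ((x, z, uv), p) - gp ((x, z, uv), p')) \<bullet> (p - p') = V \<bullet> (p - p') - \<tau> * (norm (p - p'))\<^sup>2"
    by (simp add: V_def inner_diff_left inner_add_left power2_norm_eq_inner)
  have "\<bar>V \<bullet> (p - p')\<bar> \<le> norm V * norm (p - p')" by (rule Cauchy_Schwarz_ineq2)
  also have "\<dots> \<le> LP * norm (p - p') * norm (p - p')" using V by (simp add: mult_right_mono)
  finally have c: "\<bar>V \<bullet> (p - p')\<bar> \<le> LP * (norm (p - p'))\<^sup>2" by (simp add: power2_eq_square mult.assoc)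
  have "(LP - \<tau>) * (norm (p - p'))\<^sup>2 \<le> - \<kappa> * (norm (p - p'))\<^sup>2"
    using tau by (intro mult_right_mono) auto
  then show "(gp ((x, z, uv), p) - gp ((x, z, uv), p')) \<bullet> (p - p') \<le> - \<kappa> * (norm (p - p'))\<^sup>2"
    using c e by (simp add: algebra_simps abs_le_iff)
  show "(gp ((x, z, uv), p) - gp ((x, z, uv), p')) \<bullet> (p - p') \<ge> - (LP + \<tau>) * (norm (p - p'))\<^sup>2"
    using c e by (simp add: algebra_simps abs_le_iff)
qed

end

lemma half_lemmas:
  fixes ps q :: "'a::real_vector"
  shows "ps - (ps + (1/2) *\<^sub>R (q - ps)) = (-1/2) *\<^sub>R (q - ps)"
    and "q - (ps + (1/2) *\<^sub>R (q - ps)) = (1/2) *\<^sub>R (q - ps)"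
proof -
  show "ps - (ps + (1/2) *\<^sub>R (q - ps)) = (-1/2) *\<^sub>R (q - ps)" by simp
  have "q - (ps + (1/2) *\<^sub>R (q - ps)) = (q - ps) - (1/2) *\<^sub>R (q - ps)" by (simp add: algebra_simps)
  also have "\<dots> = (1 - 1/2) *\<^sub>R (q - ps)" by (simp only: scaleR_left_diff_distrib scaleR_one)
  also have "\<dots> = (1/2) *\<^sub>R (q - ps)" by simp
  finally show "q - (ps + (1/2) *\<^sub>R (q - ps)) = (1/2) *\<^sub>R (q - ps)" .
qed

context pgm begin

lemma seg_in_S: "p \<in> S \<Longrightarrow> q \<in> S \<Longrightarrow> 0 \<le> s \<Longrightarrow> s \<le> 1 \<Longrightarrow> p + s *\<^sub>R (q - p) \<in> S"
proof -
  assume a: "p \<in> S" "q \<in> S" "0 \<le> s" "s \<le> 1"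
  have "(1 - s) *\<^sub>R p + s *\<^sub>R q \<in> S" using S_props(2) a unfolding convex_alt by blast
  moreover have "(1 - s) *\<^sub>R p + s *\<^sub>R q = p + s *\<^sub>R (q - p)" by (simp add: algebra_simps)
  ultimately show ?thesis by simp
qed

lemma quad_strong:
  assumes "x \<in> X" "z \<in> Y" "p \<in> S" "q \<in> S"
  shows "Qj ((x, z, uv), q) \<le> Qj ((x, z, uv), p) + gp ((x, z, uv), p) \<bullet> (q - p) - \<kappa> / 2 * (norm (q - p))\<^sup>2"
proof -
  define h where "h s = Qj (((x, z, uv), p) + s *\<^sub>R (0, q - p))" for s
  define h' where "h' s = gj (((x, z, uv), p) + s *\<^sub>R (0, q - p)) \<bullet> (0, q - p)" for s
  have hd: "(h has_real_derivative h' s) (at s)" for s unfolding h_def h'_def by (rule dir_deriv)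
  have h'e: "h' s = gp ((x, z, uv), p + s *\<^sub>R (q - p)) \<bullet> (q - p)" for s
    by (simp add: h'_def gj_def)
  have bd: "h' s - h' 0 \<le> (- \<kappa> * (norm (q - p))\<^sup>2) * s" if s: "0 \<le> s" "s \<le> 1" for s
  proof (cases "s = 0")
    case True then show ?thesis by simp
  next
    case False
    then have sp: "s > 0" using s by simp
    have ps: "p + s *\<^sub>R (q - p) \<in> S" using seg_in_S assms s by blast
    have "(gp ((x, z, uv), p + s *\<^sub>R (q - p)) - gp ((x, z, uv), p)) \<bullet> ((p + s *\<^sub>R (q - p)) - p)
       \<le> - \<kappa> * (norm ((p + s *\<^sub>R (q - p)) - p))\<^sup>2"
      by (rule gp_mono(1)[OF assms(1,2) ps assms(3)])
    moreover have eq: "(p + s *\<^sub>R (q - p)) - p = s *\<^sub>R (q - p)" by simp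
    ultimately have "(gp ((x, z, uv), p + s *\<^sub>R (q - p)) - gp ((x, z, uv), p)) \<bullet> (s *\<^sub>R (q - p))
       \<le> - \<kappa> * (norm (s *\<^sub>R (q - p)))\<^sup>2" by (simp only:)
    then have "s * ((gp ((x, z, uv), p + s *\<^sub>R (q - p)) - gp ((x, z, uv), p)) \<bullet> (q - p))
       \<le> s * (- \<kappa> * s * (norm (q - p))\<^sup>2)"
      using sp by (simp only: inner_scaleR_right norm_scaleR power_mult_distrib abs_of_pos) (simp add: power2_eq_square algebra_simps)
    then have X: "(gp ((x, z, uv), p + s *\<^sub>R (q - p)) - gp ((x, z, uv), p)) \<bullet> (q - p)
       \<le> - \<kappa> * s * (norm (q - p))\<^sup>2" using mult_le_cancel_left_pos[OF sp] by blast
    have "h' s - h' 0 = (gp ((x, z, uv), p + s *\<^sub>R (q - p)) - gp ((x, z, uv), p)) \<bullet> (q - p)"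
      by (simp add: h'e inner_diff_left)
    with X show ?thesis by (simp add: mult_ac)
  qed
  have "h 1 - h 0 \<le> h' 0 + (- \<kappa> * (norm (q - p))\<^sup>2) / 2"
    by (rule quad_bound[of h h' _]) (use hd bd in auto)
  then show ?thesis by (simp add: h_def h'e)
qed

lemma quad_ascent:
  assumes "x \<in> X" "z \<in> Y" "p \<in> S" "q \<in> S"
  shows "Qj ((x, z, uv), q) \<ge> Qj ((x, z, uv), p) + gp ((x, z, uv), p) \<bullet> (q - p) - (LP + \<tau>) / 2 * (norm (q - p))\<^sup>2"
proof -
  define h where "h s = - Qj (((x, z, uv), p) + s *\<^sub>R (0, q - p))" for s
  define h' where "h' s = - (gj (((x, z, uv), p) + s *\<^sub>R (0, q - p)) \<bullet> (0, q - p))" for s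
  have hd: "(h has_real_derivative h' s) (at s)" for s unfolding h_def h'_def
    by (intro DERIV_minus dir_deriv)
  have h'e: "h' s = - (gp ((x, z, uv), p + s *\<^sub>R (q - p)) \<bullet> (q - p))" for s
    by (simp add: h'_def gj_def)
  have bd: "h' s - h' 0 \<le> ((LP + \<tau>) * (norm (q - p))\<^sup>2) * s" if s: "0 \<le> s" "s \<le> 1" for s
  proof (cases "s = 0")
    case True then show ?thesis by simp
  next
    case False
    then have sp: "s > 0" using s by simp
    have ps: "p + s *\<^sub>R (q - p) \<in> S" using seg_in_S assms s by blast
    have "(gp ((x, z, uv), p + s *\<^sub>R (q - p)) - gp ((x, z, uv), p)) \<bullet> ((p + s *\<^sub>R (q - p)) - p)
       \<ge> - (LP + \<tau>) * (norm ((p + s *\<^sub>R (q - p)) - p))\<^sup>2"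
      by (rule gp_mono(2)[OF assms(1,2) ps assms(3)])
    moreover have eq: "(p + s *\<^sub>R (q - p)) - p = s *\<^sub>R (q - p)" by simp
    ultimately have "(gp ((x, z, uv), p + s *\<^sub>R (q - p)) - gp ((x, z, uv), p)) \<bullet> (s *\<^sub>R (q - p))
       \<ge> - (LP + \<tau>) * (norm (s *\<^sub>R (q - p)))\<^sup>2" by (simp only:)
    then have "s * ((gp ((x, z, uv), p + s *\<^sub>R (q - p)) - gp ((x, z, uv), p)) \<bullet> (q - p))
       \<ge> s * (- (LP + \<tau>) * s * (norm (q - p))\<^sup>2)"
      using sp by (simp only: inner_scaleR_right norm_scaleR power_mult_distrib abs_of_pos) (simp add: power2_eq_square algebra_simps)
    then have X: "(gp ((x, z, uv), p + s *\<^sub>R (q - p)) - gp ((x, z, uv), p)) \<bullet> (q - p)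
       \<ge> - (LP + \<tau>) * s * (norm (q - p))\<^sup>2" using mult_le_cancel_left_pos[OF sp] by blast
    have "h' s - h' 0 = - ((gp ((x, z, uv), p + s *\<^sub>R (q - p)) - gp ((x, z, uv), p)) \<bullet> (q - p))"
      by (simp add: h'e inner_diff_left)
    with X show ?thesis by (simp add: algebra_simps)
  qed
  have "h 1 - h 0 \<le> h' 0 + ((LP + \<tau>) * (norm (q - p))\<^sup>2) / 2"
    by (rule quad_bound[of h h' _]) (use hd bd in auto)
  then show ?thesis by (simp add: h_def h'e)
qed

definition th where "th w = (SUP p\<in>S. Qj (w, p))"

lemma Qj_cont: "continuous_on T (\<lambda>p. Qj (w, p))"
proof -
  have "isCont Qj W" for W using hasQj[of W] by (rule has_derivative_continuous)
  then have "continuous_on UNIV Qj" by (simp add: continuous_at_imp_continuous_on)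
  then show ?thesis by (rule continuous_on_compose2) (auto intro!: continuous_intros)
qed

lemma max_exists: "\<exists>p\<in>S. \<forall>q\<in>S. Qj (w, q) \<le> Qj (w, p)"
  using continuous_attains_sup[OF S_props(4) S_props(1) Qj_cont] by blast

lemma th_max: "p \<in> S \<Longrightarrow> \<forall>q\<in>S. Qj (w, q) \<le> Qj (w, p) \<Longrightarrow> th w = Qj (w, p)"
  unfolding th_def by (rule cSup_eq_maximum) auto

lemma th_ge: "q \<in> S \<Longrightarrow> Qj (w, q) \<le> th w"
proof -
  assume q: "q \<in> S"
  obtain p where p: "p \<in> S" "\<forall>q\<in>S. Qj (w, q) \<le> Qj (w, p)" using max_exists by blast
  have "Qj (w, q) \<le> Qj (w, p)" using p(2) q by blast
  then show ?thesis using th_max[OF p] by simp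
qed

lemma quad_growth_aux:
  assumes "x \<in> X" "z \<in> Y" "ps \<in> S" "\<forall>q\<in>S. Qj ((x, z, uv), q) \<le> Qj ((x, z, uv), ps)" "q \<in> S"
    and m: "m \<in> S" and e1: "ps - m = (-1/2) *\<^sub>R (q - ps)" and e2: "q - m = (1/2) *\<^sub>R (q - ps)"
  shows "\<kappa> / 4 * (norm (q - ps))\<^sup>2 \<le> th (x, z, uv) - Qj ((x, z, uv), q)"
proof -
  have t: "th (x, z, uv) = Qj ((x, z, uv), ps)" by (rule th_max[OF assms(3,4)])
  have a1: "Qj ((x, z, uv), ps) \<le> Qj ((x, z, uv), m) + gp ((x, z, uv), m) \<bullet> (ps - m) - \<kappa> / 2 * (norm (ps - m))\<^sup>2"
    using quad_strong[OF assms(1,2) m assms(3)] .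
  have a2: "Qj ((x, z, uv), q) \<le> Qj ((x, z, uv), m) + gp ((x, z, uv), m) \<bullet> (q - m) - \<kappa> / 2 * (norm (q - m))\<^sup>2"
    using quad_strong[OF assms(1,2) m assms(5)] .
  have mm: "Qj ((x, z, uv), m) \<le> Qj ((x, z, uv), ps)" using assms(4) m by (rule bspec)
  have i1: "gp ((x, z, uv), m) \<bullet> (ps - m) = -(1/2) * (gp ((x, z, uv), m) \<bullet> (q - ps))"
    unfolding e1 by (simp only: inner_scaleR_right)
  have i2: "gp ((x, z, uv), m) \<bullet> (q - m) = (1/2) * (gp ((x, z, uv), m) \<bullet> (q - ps))"
    unfolding e2 by (simp only: inner_scaleR_right)
  have n1: "\<kappa> / 2 * (norm (ps - m))\<^sup>2 = (\<kappa> * (norm (q - ps))\<^sup>2) / 8"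
    unfolding e1 by (simp add: power_mult_distrib power2_eq_square)
  have n2: "\<kappa> / 2 * (norm (q - m))\<^sup>2 = (\<kappa> * (norm (q - ps))\<^sup>2) / 8"
    unfolding e2 by (simp add: power_mult_distrib power2_eq_square)
  have n3: "\<kappa> / 4 * (norm (q - ps))\<^sup>2 = (\<kappa> * (norm (q - ps))\<^sup>2) / 4" by simp
  show ?thesis using a1 a2 mm unfolding t i1 i2 n1 n2 n3 by linarith
qed

lemma quad_growth:
  assumes "x \<in> X" "z \<in> Y" "ps \<in> S" "\<forall>q\<in>S. Qj ((x, z, uv), q) \<le> Qj ((x, z, uv), ps)" "q \<in> S"
  shows "\<kappa> / 4 * (norm (q - ps))\<^sup>2 \<le> th (x, z, uv) - Qj ((x, z, uv), q)"
proof -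
  have h: "(0::real) \<le> 1/2" "(1/2::real) \<le> 1" by simp_all
  have m: "ps + (1/2) *\<^sub>R (q - ps) \<in> S" by (rule seg_in_S[OF assms(3,5) h])
  show ?thesis
    using quad_growth_aux[OF assms m half_lemmas(1)[of ps q] half_lemmas(2)[of q ps]] .
qed

end

lemma norm_sq_triple: "(norm (a, b, d))\<^sup>2 = (norm a)\<^sup>2 + (norm b)\<^sup>2 + (norm d)\<^sup>2"
  by (simp add: norm_Pair)

context pgm begin

lemma tau_pos: "\<tau> > 0"
proof -
  have "2 * \<rho> * Lg \<ge> 0" using rho_pos Lg_nn by simp
  then show ?thesis using tau kappa_pos Lf_nn by linarith
qed

lemma norm_snd_diff: "norm (snd a - snd b) \<le> norm (a - b)"
  using dist_snd_le[of a b] by (simp add: dist_norm)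

lemma norm_fst_diff: "norm (fst a - fst b) \<le> norm (a - b)"
  using dist_fst_le[of a b] by (simp add: dist_norm)

lemma snd_lipF: "x \<in> X \<Longrightarrow> x' \<in> X \<Longrightarrow> p \<in> S \<Longrightarrow> p' \<in> S \<Longrightarrow>
   norm (snd (grad F (x', p')) - snd (grad F (x, p))) \<le> Lf * norm ((x', p') - (x, p))"
proof -
  assume a: "x \<in> X" "x' \<in> X" "p \<in> S" "p' \<in> S"
  have "(x', p') \<in> X \<times> Y \<times> \<Lambda>" "(x, p) \<in> X \<times> Y \<times> \<Lambda>" using a by auto
  from lipF[OF this] norm_snd_diff[of "grad F (x', p')" "grad F (x, p)"] show ?thesis by linarith
qed

lemma fst_lipF: "x \<in> X \<Longrightarrow> x' \<in> X \<Longrightarrow> p \<in> S \<Longrightarrow> p' \<in> S \<Longrightarrow>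
   norm (fst (grad F (x', p')) - fst (grad F (x, p))) \<le> Lf * norm ((x', p') - (x, p))"
proof -
  assume a: "x \<in> X" "x' \<in> X" "p \<in> S" "p' \<in> S"
  have "(x', p') \<in> X \<times> Y \<times> \<Lambda>" "(x, p) \<in> X \<times> Y \<times> \<Lambda>" using a by auto
  from lipF[OF this] norm_fst_diff[of "grad F (x', p')" "grad F (x, p)"] show ?thesis by linarith
qed

lemma snd_lipg: "a \<in> S \<Longrightarrow> b \<in> S \<Longrightarrow> norm (snd (grad g a) - snd (grad g b)) \<le> Lg * norm (a - b)"
  using lipg norm_snd_diff[of "grad g a" "grad g b"] by (meson order_trans)

lemma fst_lipg: "a \<in> S \<Longrightarrow> b \<in> S \<Longrightarrow> norm (fst (grad g a) - fst (grad g b)) \<le> Lg * norm (a - b)"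
  using lipg norm_fst_diff[of "grad g a" "grad g b"] by (meson order_trans)

lemma gp_w:
  assumes "x \<in> X" "x' \<in> X" "z \<in> Y" "z' \<in> Y" "p \<in> S"
  shows "norm (gp ((x', z', uv'), p) - gp ((x, z, uv), p)) \<le> (Lf + \<rho> * Lg + \<tau>) * norm ((x', z', uv') - (x, z, uv))"
proof -
  obtain y l where p: "p = (y, l)" by force
  define N where "N = norm ((x', z', uv') - (x, z, uv))"
  have Nx: "norm (x' - x) \<le> N" "norm (z' - z) \<le> N" "norm (uv' - uv) \<le> N" unfolding N_def
    by (simp_all add: norm_fst_le) (metis norm_fst_le norm_snd_le order_trans)+
  have e: "gp ((x', z', uv'), p) - gp ((x, z, uv), p) =
     (snd (grad F (x', p)) - snd (grad F (x, p))) + \<rho> *\<^sub>R (0, snd (grad g (z', l)) - snd (grad g (z, l)))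
     + \<tau> *\<^sub>R (uv' - uv)"
    by (simp add: gp_def p algebra_simps)
  have n1: "norm (snd (grad F (x', p)) - snd (grad F (x, p))) \<le> Lf * N"
  proof -
    have "norm (snd (grad F (x', p)) - snd (grad F (x, p))) \<le> Lf * norm ((x', p) - (x, p))"
      using assms by (intro snd_lipF) auto
    also have "\<dots> \<le> Lf * N" using Nx Lf_nn by (simp add: mult_left_mono)
    finally show ?thesis .
  qed
  have n2: "norm (\<rho> *\<^sub>R ((0::'y), snd (grad g (z', l)) - snd (grad g (z, l)))) \<le> \<rho> * Lg * N"
  proof -
    have "norm (snd (grad g (z', l)) - snd (grad g (z, l))) \<le> Lg * norm ((z', l) - (z, l))"
      using assms p by (intro snd_lipg) auto
    also have "\<dots> \<le> Lg * N" using Nx Lg_nn by (simp add: mult_left_mono)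
    finally show ?thesis using rho_pos by (simp add: mult_left_mono mult.assoc)
  qed
  have n3: "norm (\<tau> *\<^sub>R (uv' - uv)) \<le> \<tau> * N"
    using Nx tau_pos by (simp add: mult_left_mono)
  have "norm (gp ((x', z', uv'), p) - gp ((x, z, uv), p)) \<le> Lf * N + \<rho> * Lg * N + \<tau> * N"
    unfolding e using n1 n2 n3 norm_triangle_ineq
    by (smt (verit, ccfv_threshold) norm_triangle_le)
  then show ?thesis by (simp add: N_def algebra_simps)
qed

lemma gw_w:
  assumes "x \<in> X" "x' \<in> X" "z \<in> Y" "z' \<in> Y" "p \<in> S"
  shows "norm (gw ((x', z', uv'), p) - gw ((x, z, uv), p)) \<le> (Lf + \<rho> * Lg + \<tau>) * norm ((x', z', uv') - (x, z, uv))"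
proof -
  obtain y l where p: "p = (y, l)" by force
  define N where "N = norm ((x', z', uv') - (x, z, uv))"
  have Nx: "norm (x' - x) \<le> N" "norm (z' - z) \<le> N" "norm (uv' - uv) \<le> N" unfolding N_def
    by (simp_all add: norm_fst_le) (metis norm_fst_le norm_snd_le order_trans)+
  have e: "gw ((x', z', uv'), p) - gw ((x, z, uv), p) =
     (fst (grad F (x', p)) - fst (grad F (x, p)), \<rho> *\<^sub>R (fst (grad g (z', l)) - fst (grad g (z, l))),
      \<tau> *\<^sub>R (uv - uv'))"
    by (simp add: gw_def p algebra_simps)
  have n1: "norm (fst (grad F (x', p)) - fst (grad F (x, p))) \<le> Lf * N"
  proof -
    have "norm (fst (grad F (x', p)) - fst (grad F (x, p))) \<le> Lf * norm ((x', p) - (x, p))"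
      using assms by (intro fst_lipF) auto
    also have "\<dots> \<le> Lf * N" using Nx Lf_nn by (simp add: mult_left_mono)
    finally show ?thesis .
  qed
  have n2: "norm (\<rho> *\<^sub>R (fst (grad g (z', l)) - fst (grad g (z, l)))) \<le> \<rho> * Lg * N"
  proof -
    have "norm (fst (grad g (z', l)) - fst (grad g (z, l))) \<le> Lg * norm ((z', l) - (z, l))"
      using assms p by (intro fst_lipg) auto
    also have "\<dots> \<le> Lg * N" using Nx Lg_nn by (simp add: mult_left_mono)
    finally show ?thesis using rho_pos by (simp add: mult_left_mono mult.assoc)
  qed
  have n3: "norm (\<tau> *\<^sub>R (uv - uv')) \<le> \<tau> * N"
    using Nx tau_pos by (simp add: mult_left_mono norm_minus_commute)
  have "norm (gw ((x', z', uv'), p) - gw ((x, z, uv), p)) \<le> Lf * N + \<rho> * Lg * N + \<tau> * N"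
  proof -
    have "norm (gw ((x', z', uv'), p) - gw ((x, z, uv), p)) \<le>
      norm (fst (grad F (x', p)) - fst (grad F (x, p))) + norm (\<rho> *\<^sub>R (fst (grad g (z', l)) - fst (grad g (z, l))))
      + norm (\<tau> *\<^sub>R (uv - uv'))" unfolding e by (rule norm_triple)
    then show ?thesis using n1 n2 n3 by linarith
  qed
  then show ?thesis by (simp add: N_def algebra_simps)
qed

lemma gw_p:
  assumes "x \<in> X" "z \<in> Y" "p \<in> S" "p' \<in> S"
  shows "(norm (gw ((x, z, uv), p) - gw ((x, z, uv), p')))\<^sup>2 \<le> (Lf\<^sup>2 + \<rho>\<^sup>2 * Lg\<^sup>2 + \<tau>\<^sup>2) * (norm (p - p'))\<^sup>2"
proof -
  obtain y l where p: "p = (y, l)" by force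
  obtain y' l' where p': "p' = (y', l')" by force
  define N where "N = norm (p - p')"
  have e: "gw ((x, z, uv), p) - gw ((x, z, uv), p') =
     (fst (grad F (x, p)) - fst (grad F (x, p')), \<rho> *\<^sub>R (fst (grad g (z, l)) - fst (grad g (z, l'))),
      \<tau> *\<^sub>R (p - p'))"
    by (simp add: gw_def p p' algebra_simps)
  have n1: "norm (fst (grad F (x, p)) - fst (grad F (x, p'))) \<le> Lf * N"
  proof -
    have "norm (fst (grad F (x, p)) - fst (grad F (x, p'))) \<le> Lf * norm ((x, p) - (x, p'))"
      using assms by (intro fst_lipF) auto
    then show ?thesis by (simp add: N_def)
  qed
  have n2: "norm (\<rho> *\<^sub>R (fst (grad g (z, l)) - fst (grad g (z, l')))) \<le> \<rho> * Lg * N"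
  proof -
    have "norm (fst (grad g (z, l)) - fst (grad g (z, l'))) \<le> Lg * norm ((z, l) - (z, l'))"
      using assms p p' by (intro fst_lipg) auto
    also have "\<dots> \<le> Lg * N" unfolding N_def p p' using Lg_nn by (simp add: mult_left_mono norm_snd_le)
    finally show ?thesis using rho_pos by (simp add: mult_left_mono mult.assoc)
  qed
  have n3: "norm (\<tau> *\<^sub>R (p - p')) = \<tau> * N"
    using tau_pos by (simp add: N_def)
  have s1: "(norm (fst (grad F (x, p)) - fst (grad F (x, p'))))\<^sup>2 \<le> (Lf * N)\<^sup>2"
    using n1 by (simp add: power_mono)
  have s2: "(norm (\<rho> *\<^sub>R (fst (grad g (z, l)) - fst (grad g (z, l')))))\<^sup>2 \<le> (\<rho> * Lg * N)\<^sup>2"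
    using n2 by (simp add: power_mono)
  show ?thesis unfolding e norm_sq_triple n3 using s1 s2
    by (simp add: N_def power_mult_distrib algebra_simps)
qed

end

lemma inner_arith:
  fixes \<alpha> \<kappa> L Q' Qp Qps gv gz vz nV nz :: real
  assumes "\<alpha> > 0" "\<kappa> > 0" "\<alpha> * L \<le> 1" "nV \<ge> 0" "\<kappa> \<le> L"
    and A: "Q' \<ge> Qp + gv - L / 2 * nV"
    and B: "Qps \<le> Qp + gz - \<kappa> / 2 * nz"
    and C: "\<alpha> * gz - \<alpha> * gv - vz + nV \<le> 0"
    and D: "nV - \<alpha> * gv \<le> 0"
    and E: "0 \<le> nV - 2 * (\<alpha> * \<kappa>) * vz + (\<alpha> * \<kappa>) * (\<alpha> * \<kappa>) * nz"
  shows "Qps - Q' \<le> (1 - \<kappa> * \<alpha>) * (Qps - Qp)"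
proof -
  have A2: "2 * \<alpha> * Q' \<ge> 2 * \<alpha> * Qp + 2 * \<alpha> * gv - nV"
  proof -
    have "2 * \<alpha> * Q' \<ge> 2 * \<alpha> * (Qp + gv - L / 2 * nV)" using A assms(1) by simp
    moreover have "(\<alpha> * L) * nV \<le> nV" using mult_right_mono[OF assms(3) assms(4)] by simp
    ultimately show ?thesis by (simp add: algebra_simps)
  qed
  have B2: "2 * \<alpha> * Qps \<le> 2 * \<alpha> * Qp + 2 * \<alpha> * gz - \<alpha> * \<kappa> * nz"
  proof -
    have "2 * \<alpha> * Qps \<le> 2 * \<alpha> * (Qp + gz - \<kappa> / 2 * nz)" using B assms(1) by simp
    then show ?thesis by (simp add: algebra_simps)
  qed
  have F1: "2 * \<alpha> * (Qps - Q') \<le> 2 * vz - nV - \<alpha> * \<kappa> * nz"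
    using A2 B2 C by (simp add: algebra_simps)
  have F2: "nV \<le> 2 * \<alpha> * (Q' - Qp)" using A2 D by (simp add: algebra_simps)
  have "(\<alpha> * \<kappa>) * (2 * \<alpha> * (Qps - Q')) \<le> (\<alpha> * \<kappa>) * (2 * vz - nV - \<alpha> * \<kappa> * nz)"
    using F1 assms(1,2) by (simp add: mult_left_mono)
  also have "\<dots> \<le> (1 - \<alpha> * \<kappa>) * nV" using E by (simp add: algebra_simps)
  also have "\<dots> \<le> (1 - \<alpha> * \<kappa>) * (2 * \<alpha> * (Q' - Qp))"
  proof (rule mult_left_mono[OF F2])
    have "\<alpha> * \<kappa> \<le> \<alpha> * L" using assms(1,5) by simp
    then show "0 \<le> 1 - \<alpha> * \<kappa>" using assms(3) by linarith
  qed
  finally have "(2 * \<alpha>) * ((\<alpha> * \<kappa>) * (Qps - Q')) \<le> (2 * \<alpha>) * ((1 - \<alpha> * \<kappa>) * (Q' - Qp))"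
    by (simp add: algebra_simps)
  then have "(\<alpha> * \<kappa>) * (Qps - Q') \<le> (1 - \<alpha> * \<kappa>) * (Q' - Qp)" using assms(1) by simp
  then show ?thesis by (simp add: algebra_simps)
qed

context pgm begin

lemma LP_nn: "LP \<ge> 0"
proof -
  have "2 * \<rho> * Lg \<ge> 0" using rho_pos Lg_nn by simp
  then show ?thesis using Lf_nn by linarith
qed

lemma inner_step:
  assumes x: "x \<in> X" "z \<in> Y" and p: "p \<in> S" "p' \<in> S" "ps \<in> S"
    and mx: "\<forall>q\<in>S. Qj ((x, z, uv), q) \<le> Qj ((x, z, uv), ps)"
    and al: "\<alpha> > 0" "\<alpha> * (LP + \<tau>) \<le> 1"
    and proj: "\<forall>q\<in>S. (p + \<alpha> *\<^sub>R gp ((x, z, uv), p) - p') \<bullet> (q - p') \<le> 0"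
  shows "th (x, z, uv) - Qj ((x, z, uv), p') \<le> (1 - \<kappa> * \<alpha>) * (th (x, z, uv) - Qj ((x, z, uv), p))"
proof -
  define G where "G = gp ((x, z, uv), p)"
  define V where "V = p' - p"
  define D where "D = ps - p"
  have t: "th (x, z, uv) = Qj ((x, z, uv), ps)" by (rule th_max[OF p(3) mx])
  have A: "Qj ((x, z, uv), p') \<ge> Qj ((x, z, uv), p) + G \<bullet> V - (LP + \<tau>) / 2 * (norm V)\<^sup>2"
    unfolding G_def V_def using quad_ascent[OF x p(1,2)] .
  have B: "Qj ((x, z, uv), ps) \<le> Qj ((x, z, uv), p) + G \<bullet> D - \<kappa> / 2 * (norm D)\<^sup>2"
    unfolding G_def D_def using quad_strong[OF x p(1,3)] .
  have e1: "p + \<alpha> *\<^sub>R G - p' = \<alpha> *\<^sub>R G - V" by (simp add: V_def algebra_simps)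
  have e2: "ps - p' = D - V" by (simp add: V_def D_def algebra_simps)
  have e3: "p - p' = - V" by (simp add: V_def)
  have C0: "(\<alpha> *\<^sub>R G - V) \<bullet> (D - V) \<le> 0" using proj p(3) unfolding G_def e1[unfolded G_def] e2[symmetric] by blast
  have C: "\<alpha> * (G \<bullet> D) - \<alpha> * (G \<bullet> V) - V \<bullet> D + (norm V)\<^sup>2 \<le> 0"
    using C0 by (simp add: inner_diff_left inner_diff_right power2_norm_eq_inner inner_commute algebra_simps)
  have D0: "(\<alpha> *\<^sub>R G - V) \<bullet> (- V) \<le> 0" using proj p(1) unfolding G_def e1[unfolded G_def] e3[symmetric] by blast
  have Dd: "(norm V)\<^sup>2 - \<alpha> * (G \<bullet> V) \<le> 0"
    using D0 by (simp add: inner_diff_left power2_norm_eq_inner algebra_simps)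
  have E0: "0 \<le> (norm (V - (\<alpha> * \<kappa>) *\<^sub>R D))\<^sup>2" by simp
  have E: "0 \<le> (norm V)\<^sup>2 - 2 * (\<alpha> * \<kappa>) * (V \<bullet> D) + (\<alpha> * \<kappa>) * (\<alpha> * \<kappa>) * (norm D)\<^sup>2"
    using E0 by (simp add: power2_norm_eq_inner inner_diff_left inner_diff_right inner_commute algebra_simps)
  have kL: "\<kappa> \<le> LP + \<tau>" using tau LP_nn kappa_pos by linarith
  have "Qj ((x, z, uv), ps) - Qj ((x, z, uv), p') \<le> (1 - \<kappa> * \<alpha>) * (Qj ((x, z, uv), ps) - Qj ((x, z, uv), p))"
    by (rule inner_arith[OF al(1) kappa_pos al(2) zero_le_power2 kL A B C Dd E])
  then show ?thesis unfolding t .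
qed

end

lemma young_ineq:
  fixes e N \<epsilon> :: real
  assumes "\<epsilon> > 0"
  shows "e * N \<le> \<epsilon> / 2 * N\<^sup>2 + e\<^sup>2 / (2 * \<epsilon>)"
proof -
  have "0 \<le> (\<epsilon> * N - e)\<^sup>2" by simp
  then have "2 * \<epsilon> * (e * N) \<le> 2 * \<epsilon> * (\<epsilon> / 2 * N\<^sup>2 + e\<^sup>2 / (2 * \<epsilon>))"
    using assms by (simp add: power2_eq_square algebra_simps)
  then show ?thesis using assms by simp
qed

lemma final_arith:
  fixes \<alpha> L K s \<kappa> N e E R thw thw' T1 T2 T3 :: real
  assumes al: "\<alpha> > 0" "\<alpha> * L < 1" and kp: "\<kappa> > 0" and N: "N \<ge> 0"
    and H1: "thw' - thw \<le> T1 + T2 + T3 + K1 * N\<^sup>2"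
    and H2: "\<alpha> * T1 \<le> - N\<^sup>2"
    and H3: "T2 \<le> K2 * N\<^sup>2"
    and H4: "T3 \<le> e * N" "e\<^sup>2 \<le> s * E" "E \<le> 4 / \<kappa> * R" "s \<ge> 0"
    and H5: "K1 + K2 \<le> L"
  shows "(1 - \<alpha> * L) / (4 * \<alpha>) * N\<^sup>2 \<le> thw - thw' + 2 * \<alpha> * s / (\<kappa> * (1 - \<alpha> * L)) * R"
proof -
  define \<epsilon> where "\<epsilon> = (1 - \<alpha> * L) / \<alpha>"
  have ep: "\<epsilon> > 0" unfolding \<epsilon>_def using al by simp
  have y: "e * N \<le> \<epsilon> / 2 * N\<^sup>2 + e\<^sup>2 / (2 * \<epsilon>)" by (rule young_ineq[OF ep])
  have "e\<^sup>2 \<le> s * (4 / \<kappa> * R)" using H4(2,3,4) by (meson mult_left_mono order_trans)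
  then have "e\<^sup>2 / (2 * \<epsilon>) \<le> s * (4 / \<kappa> * R) / (2 * \<epsilon>)" by (rule divide_right_mono) (use ep in simp)
  also have "\<dots> = 2 * \<alpha> * s / (\<kappa> * (1 - \<alpha> * L)) * R" unfolding \<epsilon>_def using al kp by (simp add: field_simps)
  finally have y2: "T3 \<le> \<epsilon> / 2 * N\<^sup>2 + 2 * \<alpha> * s / (\<kappa> * (1 - \<alpha> * L)) * R" using y H4(1) by linarith
  have T1: "T1 \<le> - N\<^sup>2 / \<alpha>" using H2 al by (simp add: field_simps)
  have coef: "- (1 / \<alpha>) + K1 + K2 + \<epsilon> / 2 \<le> - ((1 - \<alpha> * L) / (4 * \<alpha>))"
  proof -
    have "L \<le> 1 / \<alpha>" using al by (simp add: field_simps)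
    moreover have "- (1 / \<alpha>) + L + \<epsilon> / 2 + (1 - \<alpha> * L) / (4 * \<alpha>) = L / 4 - (1 / \<alpha>) / 4"
      unfolding \<epsilon>_def using al by (simp add: field_simps)
    moreover have "- ia + K1 + K2 + \<epsilon> / 2 \<le> - c"
      if "L \<le> ia" "- ia + L + \<epsilon> / 2 + c = L / 4 - ia / 4" for ia c :: real using that H5 by linarith
    ultimately show ?thesis by blast
  qed
  have "(- (1 / \<alpha>) + K1 + K2 + \<epsilon> / 2) * N\<^sup>2 \<le> (- ((1 - \<alpha> * L) / (4 * \<alpha>))) * N\<^sup>2"
    by (rule mult_right_mono[OF coef zero_le_power2])
  moreover have "thw' - thw \<le> (- (1 / \<alpha>) + K1 + K2 + \<epsilon> / 2) * N\<^sup>2 + 2 * \<alpha> * s / (\<kappa> * (1 - \<alpha> * L)) * R"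
    using H1 T1 H3 y2 by (simp add: algebra_simps)
  ultimately show ?thesis by (simp add: algebra_simps)
qed

lemma conv_seg: "convex C \<Longrightarrow> a \<in> C \<Longrightarrow> b \<in> C \<Longrightarrow> 0 \<le> s \<Longrightarrow> s \<le> 1 \<Longrightarrow> a + s *\<^sub>R (b - a) \<in> C"
proof -
  assume a: "convex C" "a \<in> C" "b \<in> C" "0 \<le> s" "s \<le> 1"
  have "(1 - s) *\<^sub>R a + s *\<^sub>R b \<in> C" using a unfolding convex_alt by blast
  moreover have "(1 - s) *\<^sub>R a + s *\<^sub>R b = a + s *\<^sub>R (b - a)" by (simp add: algebra_simps)
  ultimately show ?thesis by simp
qed

lemma proj_ineq:
  assumes "convex C" "closed C" "x \<in> C" "x' = closest_point C (x - \<alpha> *\<^sub>R d)"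
  shows "\<alpha> * (d \<bullet> (x' - x)) \<le> - (norm (x' - x))\<^sup>2"
proof -
  have "(x - \<alpha> *\<^sub>R d - x') \<bullet> (x - x') \<le> 0"
    using closest_point_dot[OF assms(1,2,3), of "x - \<alpha> *\<^sub>R d"] assms(4) by simp
  then show ?thesis
    by (simp add: inner_diff_left inner_diff_right power2_norm_eq_inner inner_commute algebra_simps)
qed

context pgm begin

lemma inner_iter:
  assumes x: "x \<in> X" "z \<in> Y" and ps: "ps \<in> S"
    and mx: "\<forall>q\<in>S. Qj ((x, z, uv), q) \<le> Qj ((x, z, uv), ps)"
    and al: "\<alpha> > 0" "\<alpha> * (LP + \<tau>) \<le> 1"
    and P: "\<And>t. t \<le> n \<Longrightarrow> P t \<in> S"
    and step: "\<And>t q. t < n \<Longrightarrow> q \<in> S \<Longrightarrow> (P t + \<alpha> *\<^sub>R gp ((x, z, uv), P t) - P (Suc t)) \<bullet> (q - P (Suc t)) \<le> 0"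
  shows "th (x, z, uv) - Qj ((x, z, uv), P n) \<le> (1 - \<kappa> * \<alpha>) ^ n * (th (x, z, uv) - Qj ((x, z, uv), P 0))"
  using P step
proof (induction n)
  case 0 then show ?case by simp
next
  case (Suc n)
  have kL: "\<kappa> * \<alpha> \<le> 1"
  proof -
    have "\<kappa> \<le> LP + \<tau>" using tau LP_nn kappa_pos by linarith
    then have "\<kappa> * \<alpha> \<le> (LP + \<tau>) * \<alpha>" using al(1) by (simp add: mult_right_mono)
    then show ?thesis using al(2) by (simp add: mult.commute)
  qed
  have IH: "th (x, z, uv) - Qj ((x, z, uv), P n) \<le> (1 - \<kappa> * \<alpha>) ^ n * (th (x, z, uv) - Qj ((x, z, uv), P 0))"
    using Suc by simp
  have "th (x, z, uv) - Qj ((x, z, uv), P (Suc n)) \<le> (1 - \<kappa> * \<alpha>) * (th (x, z, uv) - Qj ((x, z, uv), P n))"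
    by (rule inner_step[OF x _ _ ps mx al]) (use Suc in auto)
  also have "\<dots> \<le> (1 - \<kappa> * \<alpha>) * ((1 - \<kappa> * \<alpha>) ^ n * (th (x, z, uv) - Qj ((x, z, uv), P 0)))"
    using IH kL by (simp add: mult_left_mono)
  finally show ?case by (simp add: mult.assoc)
qed

lemma maxim_lip:
  assumes "x \<in> X" "x' \<in> X" "z \<in> Y" "z' \<in> Y" "ps \<in> S" "pp \<in> S"
    and mx: "\<forall>q\<in>S. Qj ((x, z, uv), q) \<le> Qj ((x, z, uv), ps)"
    and mx': "\<forall>q\<in>S. Qj ((x', z', uv'), q) \<le> Qj ((x', z', uv'), pp)"
  shows "norm (pp - ps) \<le> 2 * (Lf + \<rho> * Lg + \<tau>) / \<kappa> * norm ((x', z', uv') - (x, z, uv))"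
proof -
  define a where "a = Lf + \<rho> * Lg + \<tau>"
  define N where "N = norm ((x', z', uv') - (x, z, uv))"
  define d where "d = pp - ps"
  have g1: "\<kappa> / 4 * (norm (pp - ps))\<^sup>2 \<le> th (x, z, uv) - Qj ((x, z, uv), pp)"
    using quad_growth[OF assms(1,3,5) mx assms(6)] .
  have g2: "\<kappa> / 4 * (norm (ps - pp))\<^sup>2 \<le> th (x', z', uv') - Qj ((x', z', uv'), ps)"
    using quad_growth[OF assms(2,4,6) mx' assms(5)] .
  have t1: "th (x, z, uv) = Qj ((x, z, uv), ps)" by (rule th_max[OF assms(5) mx])
  have t2: "th (x', z', uv') = Qj ((x', z', uv'), pp)" by (rule th_max[OF assms(6) mx'])
  define h where "h s = Qj (((x', z', uv'), ps) + s *\<^sub>R (0, d)) - Qj (((x, z, uv), ps) + s *\<^sub>R (0, d))" for s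
  define h' where "h' s = gj (((x', z', uv'), ps) + s *\<^sub>R (0, d)) \<bullet> (0, d) - gj (((x, z, uv), ps) + s *\<^sub>R (0, d)) \<bullet> (0, d)" for s
  have hd: "(h has_real_derivative h' s) (at s)" for s
    unfolding h_def h'_def by (intro DERIV_diff dir_deriv)
  have hb: "h' s \<le> a * N * norm d" if s: "0 \<le> s" "s \<le> 1" for s
  proof -
    have pin: "ps + s *\<^sub>R d \<in> S" unfolding d_def using seg_in_S[OF assms(5,6) s] .
    have "h' s = (gp ((x', z', uv'), ps + s *\<^sub>R d) - gp ((x, z, uv), ps + s *\<^sub>R d)) \<bullet> d"
      by (simp add: h'_def gj_def inner_diff_left)
    also have "\<dots> \<le> norm (gp ((x', z', uv'), ps + s *\<^sub>R d) - gp ((x, z, uv), ps + s *\<^sub>R d)) * norm d"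
      by (rule norm_cauchy_schwarz)
    also have "\<dots> \<le> a * N * norm d" unfolding a_def N_def
      by (rule mult_right_mono[OF gp_w[OF assms(1,2,3,4) pin] norm_ge_zero])
    finally show ?thesis .
  qed
  have "h 1 - h 0 \<le> a * N * norm d" by (rule mvt_le[of h h']) (use hd hb in auto)
  moreover have "h 1 - h 0 = (Qj ((x', z', uv'), pp) - Qj ((x', z', uv'), ps)) + (Qj ((x, z, uv), ps) - Qj ((x, z, uv), pp))"
    by (simp add: h_def d_def)
  moreover have "\<kappa> / 4 * (norm (pp - ps))\<^sup>2 \<le> th (x', z', uv') - Qj ((x', z', uv'), ps)"
    using g2 by (simp add: norm_minus_commute)
  moreover have "\<kappa> / 2 * (norm (pp - ps))\<^sup>2 = \<kappa> / 4 * (norm (pp - ps))\<^sup>2 + \<kappa> / 4 * (norm (pp - ps))\<^sup>2"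
    by simp
  ultimately have k: "\<kappa> / 2 * (norm d)\<^sup>2 \<le> a * N * norm d"
    using g1 t1 t2 unfolding d_def by linarith
  show ?thesis
  proof (cases "norm d = 0")
    case True
    then show ?thesis using kappa_pos Lf_nn Lg_nn rho_pos tau_pos by (simp add: d_def)
  next
    case False
    then have nd: "norm d > 0" by simp
    from k have "norm d * (\<kappa> / 2 * norm d) \<le> norm d * (a * N)" by (simp add: power2_eq_square mult_ac)
    then have "\<kappa> / 2 * norm d \<le> a * N" using nd by simp
    then have "norm d \<le> 2 * a / \<kappa> * N" using kappa_pos by (simp add: field_simps)
    then show ?thesis by (simp add: a_def N_def d_def)
  qed
qed

end

context pgm begin

lemma const_ineq:
  "(Lf + \<rho> * Lg + \<tau>) / 2 + sqrt (Lf\<^sup>2 + \<rho>\<^sup>2 * Lg\<^sup>2 + \<tau>\<^sup>2) * (2 * (Lf + \<rho> * Lg + \<tau>) / \<kappa>)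
   \<le> (Lf + \<rho> * Lg + 2 * \<tau>) * (1 + (Lf + 2 * \<rho> * Lg + \<tau>) / \<kappa>)"
proof -
  define c where "c = Lf + \<rho> * Lg"
  define a where "a = Lf + \<rho> * Lg + \<tau>"
  define b where "b = sqrt (Lf\<^sup>2 + \<rho>\<^sup>2 * Lg\<^sup>2 + \<tau>\<^sup>2)"
  have rl: "\<rho> * Lg \<ge> 0" using rho_pos Lg_nn by simp
  have c0: "c \<ge> 0" unfolding c_def using Lf_nn rl by linarith
  have ct: "c \<le> \<tau>" unfolding c_def using tau rl kappa_pos by linarith
  have a0: "a \<ge> 0" unfolding a_def using c0 tau_pos c_def by linarith
  have sq: "Lf\<^sup>2 + (\<rho> * Lg)\<^sup>2 \<le> c\<^sup>2" unfolding c_def using Lf_nn rl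
    by (simp add: power2_eq_square algebra_simps)
  have cc: "c\<^sup>2 \<le> c * \<tau>" using c0 ct by (simp add: mult_left_mono power2_eq_square)
  have "4 * (Lf\<^sup>2 + \<rho>\<^sup>2 * Lg\<^sup>2 + \<tau>\<^sup>2) \<le> (a + \<tau>)\<^sup>2"
  proof -
    have "(a + \<tau>)\<^sup>2 = c\<^sup>2 + 4 * (c * \<tau>) + 4 * \<tau>\<^sup>2" unfolding a_def c_def by (simp add: power2_eq_square algebra_simps)
    moreover have "\<rho>\<^sup>2 * Lg\<^sup>2 = (\<rho> * Lg)\<^sup>2" by (simp add: power_mult_distrib)
    ultimately show ?thesis using sq cc zero_le_power2[of c] by (simp only: distrib_left)
  qed
  then have "b \<le> (a + \<tau>) / 2" unfolding b_def
    using a0 tau_pos by (intro real_le_lsqrt) (auto simp: power_divide)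
  have b0: "b \<ge> 0" unfolding b_def by simp
  have aL: "a \<le> Lf + 2 * \<rho> * Lg + \<tau>" unfolding a_def using rl by (simp add: mult.commute)
  have "b * (2 * a / \<kappa>) \<le> (a + \<tau>) / 2 * (2 * a / \<kappa>)"
    using \<open>b \<le> (a + \<tau>) / 2\<close> a0 kappa_pos by (intro mult_right_mono) auto
  also have "\<dots> = (a + \<tau>) * a / \<kappa>" by simp
  also have "\<dots> \<le> (a + \<tau>) * (Lf + 2 * \<rho> * Lg + \<tau>) / \<kappa>"
    using aL a0 tau_pos kappa_pos by (intro divide_right_mono mult_left_mono) auto
  finally have "b * (2 * a / \<kappa>) \<le> (a + \<tau>) * (Lf + 2 * \<rho> * Lg + \<tau>) / \<kappa>" .
  moreover have "a / 2 \<le> a + \<tau>" using a0 tau_pos by simp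
  moreover have "(Lf + \<rho> * Lg + 2 * \<tau>) * (1 + (Lf + 2 * \<rho> * Lg + \<tau>) / \<kappa>)
      = (a + \<tau>) + (a + \<tau>) * (Lf + 2 * \<rho> * Lg + \<tau>) / \<kappa>"
    unfolding a_def by (simp add: algebra_simps)
  ultimately show ?thesis unfolding a_def[symmetric] b_def[symmetric] by linarith
qed

end

context pgm begin

lemma one_step:
  assumes x: "x \<in> X" "z \<in> Y" and ph: "ph \<in> S"
    and al: "\<alpha> > 0" "\<alpha> * ((Lf + \<rho> * Lg + 2 * \<tau>) * (1 + (Lf + 2 * \<rho> * Lg + \<tau>) / \<kappa>)) < 1"
    and hx: "x' = closest_point X (x - \<alpha> *\<^sub>R fst (grad F (x, ph)))"
    and hz: "z' = closest_point Y (z - (\<alpha> * \<rho>) *\<^sub>R fst (grad g (z, snd ph)))"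
    and huv: "uv' = uv - \<alpha> *\<^sub>R (\<tau> *\<^sub>R (ph - uv))"
    and hR: "th (x, z, uv) - Qj ((x, z, uv), ph) \<le> R"
  shows "(1 - \<alpha> * ((Lf + \<rho> * Lg + 2 * \<tau>) * (1 + (Lf + 2 * \<rho> * Lg + \<tau>) / \<kappa>))) / (4 * \<alpha>)
      * (norm ((x', z', uv') - (x, z, uv)))\<^sup>2
    \<le> th (x, z, uv) - th (x', z', uv')
      + 2 * \<alpha> * (Lf\<^sup>2 + \<rho>\<^sup>2 * Lg\<^sup>2 + \<tau>\<^sup>2) / (\<kappa> * (1 - \<alpha> * ((Lf + \<rho> * Lg + 2 * \<tau>) * (1 + (Lf + 2 * \<rho> * Lg + \<tau>) / \<kappa>)))) * R"
proof -
  define Lth where "Lth = (Lf + \<rho> * Lg + 2 * \<tau>) * (1 + (Lf + 2 * \<rho> * Lg + \<tau>) / \<kappa>)"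
  define a where "a = Lf + \<rho> * Lg + \<tau>"
  define s where "s = Lf\<^sup>2 + \<rho>\<^sup>2 * Lg\<^sup>2 + \<tau>\<^sup>2"
  define b where "b = sqrt s"
  define M where "M = 2 * a / \<kappa>"
  define w where "w = (x, z, uv)"
  define w' where "w' = (x', z', uv')"
  define \<Delta> where "\<Delta> = w' - w"
  define N where "N = norm \<Delta>"
  have x': "x' \<in> X" unfolding hx using X by (simp add: closest_point_in_set)
  have z': "z' \<in> Y" unfolding hz using Y by (simp add: closest_point_in_set)
  have \<Delta>e: "\<Delta> = (x' - x, z' - z, uv' - uv)" by (simp add: \<Delta>_def w_def w'_def)
  obtain ps where ps: "ps \<in> S" "\<forall>q\<in>S. Qj (w, q) \<le> Qj (w, ps)" using max_exists by blast
  obtain pp where pp: "pp \<in> S" "\<forall>q\<in>S. Qj (w', q) \<le> Qj (w', pp)" using max_exists by blast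
  define T1 where "T1 = gw (w, ph) \<bullet> \<Delta>"
  define T2 where "T2 = (gw (w, pp) - gw (w, ps)) \<bullet> \<Delta>"
  define T3 where "T3 = (gw (w, ps) - gw (w, ph)) \<bullet> \<Delta>"
  have H1: "th w' - th w \<le> T1 + T2 + T3 + a / 2 * N\<^sup>2"
  proof -
    have t': "th w' = Qj (w', pp)" by (rule th_max[OF pp])
    have t: "Qj (w, pp) \<le> th w" by (rule th_ge[OF pp(1)])
    define h where "h r = Qj ((w, pp) + r *\<^sub>R (\<Delta>, 0))" for r
    define h' where "h' r = gj ((w, pp) + r *\<^sub>R (\<Delta>, 0)) \<bullet> (\<Delta>, 0)" for r
    have hd: "(h has_real_derivative h' r) (at r)" for r unfolding h_def h'_def by (rule dir_deriv)
    have h'e: "h' r = gw (w + r *\<^sub>R \<Delta>, pp) \<bullet> \<Delta>" for r by (simp add: h'_def gj_def)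
    have hb: "h' r - h' 0 \<le> (a * N\<^sup>2) * r" if r: "0 \<le> r" "r \<le> 1" for r
    proof -
      have we: "w + r *\<^sub>R \<Delta> = (x + r *\<^sub>R (x' - x), z + r *\<^sub>R (z' - z), uv + r *\<^sub>R (uv' - uv))"
        by (simp add: \<Delta>e w_def)
      have xr: "x + r *\<^sub>R (x' - x) \<in> X" by (rule conv_seg[OF X(2) x(1) x' r])
      have zr: "z + r *\<^sub>R (z' - z) \<in> Y" by (rule conv_seg[OF Y(2) x(2) z' r])
      have "norm (gw ((x + r *\<^sub>R (x' - x), z + r *\<^sub>R (z' - z), uv + r *\<^sub>R (uv' - uv)), pp) - gw ((x, z, uv), pp))
         \<le> a * norm ((x + r *\<^sub>R (x' - x), z + r *\<^sub>R (z' - z), uv + r *\<^sub>R (uv' - uv)) - (x, z, uv))"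
        unfolding a_def by (rule gw_w[OF x(1) xr x(2) zr pp(1)])
      then have "norm (gw (w + r *\<^sub>R \<Delta>, pp) - gw (w, pp)) \<le> a * norm ((w + r *\<^sub>R \<Delta>) - w)"
        by (simp only: we[symmetric] w_def[symmetric])
      also have "norm ((w + r *\<^sub>R \<Delta>) - w) = r * N" using r by (simp add: N_def)
      finally have nb: "norm (gw (w + r *\<^sub>R \<Delta>, pp) - gw (w, pp)) \<le> a * (r * N)" .
      have "h' r - h' 0 = (gw (w + r *\<^sub>R \<Delta>, pp) - gw (w, pp)) \<bullet> \<Delta>" by (simp add: h'e inner_diff_left)
      also have "\<dots> \<le> norm (gw (w + r *\<^sub>R \<Delta>, pp) - gw (w, pp)) * N" unfolding N_def by (rule norm_cauchy_schwarz)
      also have "\<dots> \<le> a * (r * N) * N" using nb by (simp add: N_def mult_right_mono)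
      finally show ?thesis by (simp add: power2_eq_square mult_ac)
    qed
    have "h 1 - h 0 \<le> h' 0 + (a * N\<^sup>2) / 2" by (rule quad_bound[of h h']) (use hd hb in auto)
    moreover have "h 1 = Qj (w', pp)" by (simp add: h_def \<Delta>_def)
    moreover have "h 0 = Qj (w, pp)" by (simp add: h_def)
    moreover have "h' 0 = T1 + T2 + T3" by (simp add: h'e T1_def T2_def T3_def inner_diff_left)
    ultimately show ?thesis using t t' by simp
  qed
  have H2: "\<alpha> * T1 \<le> - N\<^sup>2"
  proof -
    define dx where "dx = fst (grad F (x, ph))"
    define dz where "dz = \<rho> *\<^sub>R fst (grad g (z, snd ph))"
    define du where "du = \<tau> *\<^sub>R (ph - uv)"
    have gwe: "gw (w, ph) = (dx, dz, du)" by (simp add: gw_def w_def dx_def dz_def du_def)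
    have T1e: "T1 = dx \<bullet> (x' - x) + dz \<bullet> (z' - z) + du \<bullet> (uv' - uv)"
      by (simp add: T1_def gwe \<Delta>e)
    have px: "\<alpha> * (dx \<bullet> (x' - x)) \<le> - (norm (x' - x))\<^sup>2"
      by (rule proj_ineq[OF X(2,3) x(1)]) (simp add: hx dx_def)
    have pz: "\<alpha> * (dz \<bullet> (z' - z)) \<le> - (norm (z' - z))\<^sup>2"
      by (rule proj_ineq[OF Y(2,3) x(2)]) (simp add: hz dz_def)
    have ue: "uv' - uv = - (\<alpha> *\<^sub>R du)" by (simp add: huv du_def)
    have pu: "\<alpha> * (du \<bullet> (uv' - uv)) = - (norm (uv' - uv))\<^sup>2"
      unfolding ue power2_norm_eq_inner by (simp add: algebra_simps)
    have "N\<^sup>2 = (norm (x' - x))\<^sup>2 + (norm (z' - z))\<^sup>2 + (norm (uv' - uv))\<^sup>2"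
      unfolding N_def \<Delta>e by (rule norm_sq_triple)
    then show ?thesis using px pz pu unfolding T1e by (simp add: distrib_left)
  qed
  have H3: "T2 \<le> (b * M) * N\<^sup>2"
  proof -
    have n: "(norm (gw (w, pp) - gw (w, ps)))\<^sup>2 \<le> s * (norm (pp - ps))\<^sup>2"
      unfolding w_def s_def by (rule gw_p[OF x pp(1) ps(1)])
    have "norm (gw (w, pp) - gw (w, ps)) \<le> b * norm (pp - ps)"
    proof -
      have "norm (gw (w, pp) - gw (w, ps)) = sqrt ((norm (gw (w, pp) - gw (w, ps)))\<^sup>2)" by simp
      also have "\<dots> \<le> sqrt (s * (norm (pp - ps))\<^sup>2)" using n by (rule real_sqrt_le_mono)
      also have "\<dots> = b * norm (pp - ps)" by (simp add: b_def real_sqrt_mult)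
      finally show ?thesis .
    qed
    moreover have "norm (pp - ps) \<le> M * N"
      using maxim_lip[OF x(1) x' x(2) z' ps(1) pp(1)] ps(2) pp(2)
      unfolding M_def N_def \<Delta>_def w_def w'_def a_def by blast
    moreover have "b \<ge> 0" by (simp add: b_def s_def)
    ultimately have "norm (gw (w, pp) - gw (w, ps)) \<le> b * (M * N)"
      by (meson mult_left_mono order_trans)
    moreover have "T2 \<le> norm (gw (w, pp) - gw (w, ps)) * N" unfolding T2_def N_def by (rule norm_cauchy_schwarz)
    moreover have "N \<ge> 0" by (simp add: N_def)
    ultimately have "T2 \<le> b * (M * N) * N" by (meson mult_right_mono order_trans)
    then show ?thesis by (simp add: power2_eq_square mult_ac)
  qed
  define e where "e = norm (gw (w, ps) - gw (w, ph))"
  define E where "E = (norm (ps - ph))\<^sup>2"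
  have H4a: "T3 \<le> e * N" unfolding T3_def e_def N_def by (rule norm_cauchy_schwarz)
  have H4b: "e\<^sup>2 \<le> s * E" unfolding e_def E_def w_def s_def by (rule gw_p[OF x ps(1) ph])
  have H4c: "E \<le> 4 / \<kappa> * R"
  proof -
    have "\<kappa> / 4 * (norm (ph - ps))\<^sup>2 \<le> th w - Qj (w, ph)"
      unfolding w_def using quad_growth[OF x ps(1) _ ph] ps(2) unfolding w_def by blast
    then have "\<kappa> / 4 * E \<le> R" using hR unfolding E_def w_def by (simp add: norm_minus_commute)
    then have "\<kappa> * E \<le> 4 * R" by simp
    then show ?thesis using kappa_pos by (simp add: pos_le_divide_eq mult.commute)
  qed
  have s0: "s \<ge> 0" by (simp add: s_def)
  have H5: "a / 2 + b * M \<le> Lth" unfolding a_def b_def M_def s_def Lth_def by (rule const_ineq)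
  have "(1 - \<alpha> * Lth) / (4 * \<alpha>) * N\<^sup>2 \<le> th w - th w' + 2 * \<alpha> * s / (\<kappa> * (1 - \<alpha> * Lth)) * R"
    by (rule final_arith[OF al(1) al(2)[folded Lth_def] kappa_pos _ H1 H2 H3 H4a H4b H4c s0 H5])
      (simp add: N_def)
  then show ?thesis unfolding Lth_def N_def \<Delta>_def w_def w'_def s_def .
qed

end

theorem mainTheorem8:
  fixes X :: "'x::euclidean_space set" and Y :: "'y::euclidean_space set"
    and \<Lambda> :: "'l::euclidean_space set"
    and fbar :: "'x \<times> 'y \<Rightarrow> real" and A :: "'x \<Rightarrow> 'l" and B :: "'y \<Rightarrow> 'l" and c :: 'l
    and g :: "'y \<times> 'l \<Rightarrow> real"
    and Lf Lg \<rho> \<kappa> \<tau> \<alpha>x \<alpha>y :: real and T K :: nat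
    and x :: "nat \<Rightarrow> 'x" and z u :: "nat \<Rightarrow> 'y" and v :: "nat \<Rightarrow> 'l"
    and y :: "nat \<Rightarrow> 'y" and lam :: "nat \<Rightarrow> 'l"
    and yin :: "nat \<Rightarrow> nat \<Rightarrow> 'y" and lin :: "nat \<Rightarrow> nat \<Rightarrow> 'l"
  defines "LP \<equiv> Lf + 2 * \<rho> * Lg"
    and "Lth \<equiv> (Lf + \<rho> * Lg + 2 * \<tau>) * (1 + (Lf + 2 * \<rho> * Lg + \<tau>) / \<kappa>)"
    and "Q \<equiv> Qfun fbar A B c g \<rho> \<tau>"
    and "\<theta> \<equiv> vartheta fbar A B c g \<rho> \<tau> Y \<Lambda>"
    and "F \<equiv> fobj fbar A B c"
  assumes X: "X \<noteq> {}" "convex X" "compact X"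
    and Y: "Y \<noteq> {}" "convex Y" "compact Y"
    and Lam: "\<Lambda> \<noteq> {}" "convex \<Lambda>" "compact \<Lambda>"
    and linA: "linear A" and linB: "linear B"
    and fbar_C1: "cont_diff fbar"
    and Lf_pos: "Lf > 0"
    and Lf_lip: "Lf-lipschitz_on (X \<times> Y \<times> \<Lambda>) (grad F)"
    and g_C1: "cont_diff g"
    and Lg_lip: "Lg-lipschitz_on (Y \<times> \<Lambda>) (grad g)"
    and g_convex: "\<forall>l\<in>\<Lambda>. convex_on Y (\<lambda>y'. g (y', l))"
    and saddle: "\<exists>zs\<in>Y. \<exists>ls\<in>\<Lambda>.
        g (zs, ls) = (SUP l\<in>\<Lambda>. INF z'\<in>Y. g (z', l)) \<and>
        g (zs, ls) = (INF z'\<in>Y. SUP l\<in>\<Lambda>. g (z', l))"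
    and rho_pos: "\<rho> > 0" and kappa_pos: "\<kappa> > 0"
    and tau: "\<tau> \<ge> LP + \<kappa>"
    and ay: "0 < \<alpha>y" "\<alpha>y < 1 / (LP + \<tau>)"
    and ax: "0 < \<alpha>x" "\<alpha>x < 1 / Lth"
    and TK: "T > 1" "K > 1"
    and init: "x 0 \<in> X" "z 0 \<in> Y" "y 0 \<in> Y" "lam 0 \<in> \<Lambda>"
    and inner0: "\<And>k. k < K \<Longrightarrow> yin k 0 = y k \<and> lin k 0 = lam k"
    and inner_step: "\<And>k t. k < K \<Longrightarrow> t < T \<Longrightarrow>
        yin k (Suc t) = closest_point Y (yin k t + \<alpha>y *\<^sub>R
          fst (grad (\<lambda>p. Q (x k) (z k) (u k) (v k) (fst p) (snd p)) (yin k t, lin k t))) \<and>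
        lin k (Suc t) = closest_point \<Lambda> (lin k t + \<alpha>y *\<^sub>R
          snd (grad (\<lambda>p. Q (x k) (z k) (u k) (v k) (fst p) (snd p)) (yin k t, lin k t)))"
    and outer_yl: "\<And>k. k < K \<Longrightarrow> y (Suc k) = yin k T \<and> lam (Suc k) = lin k T"
    and outer_x: "\<And>k. k < K \<Longrightarrow>
        x (Suc k) = closest_point X (x k - \<alpha>x *\<^sub>R fst (grad F (x k, y (Suc k), lam (Suc k))))"
    and outer_z: "\<And>k. k < K \<Longrightarrow>
        z (Suc k) = closest_point Y (z k - (\<alpha>x * \<rho>) *\<^sub>R fst (grad g (z k, lam (Suc k))))"
    and outer_u: "\<And>k. k < K \<Longrightarrow> u (Suc k) = (1 + \<alpha>x * \<tau>) *\<^sub>R u k - (\<alpha>x * \<tau>) *\<^sub>R y (Suc k)"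
    and outer_v: "\<And>k. k < K \<Longrightarrow> v (Suc k) = (1 + \<alpha>x * \<tau>) *\<^sub>R v k - (\<alpha>x * \<tau>) *\<^sub>R lam (Suc k)"
  shows "\<forall>k < K.
    (1 - \<alpha>x * Lth) / (4 * \<alpha>x) *
      (norm ((x (Suc k), z (Suc k), u (Suc k), v (Suc k)) - (x k, z k, u k, v k)))\<^sup>2
    \<le> \<theta> (x k, z k, u k, v k) - \<theta> (x (Suc k), z (Suc k), u (Suc k), v (Suc k))
      + 2 * \<alpha>x * (Lf\<^sup>2 + \<rho>\<^sup>2 * Lg\<^sup>2 + \<tau>\<^sup>2) / (\<kappa> * (1 - \<alpha>x * Lth))
        * (1 - \<kappa> * \<alpha>y) ^ T
        * (\<theta> (x k, z k, u k, v k) - Q (x k) (z k) (u k) (v k) (y k) (lam k))"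
proof -
  have LPd: "LP = Lf + 2 * \<rho> * Lg" using \<open>LP \<equiv> Lf + 2 * \<rho> * Lg\<close> by simp
  have Lthd: "Lth = (Lf + \<rho> * Lg + 2 * \<tau>) * (1 + (Lf + 2 * \<rho> * Lg + \<tau>) / \<kappa>)"
    using \<open>Lth \<equiv> (Lf + \<rho> * Lg + 2 * \<tau>) * (1 + (Lf + 2 * \<rho> * Lg + \<tau>) / \<kappa>)\<close> by simp
  have Qd: "Q = Qfun fbar A B c g \<rho> \<tau>" using \<open>Q \<equiv> Qfun fbar A B c g \<rho> \<tau>\<close> by simp
  have thd: "\<theta> = vartheta fbar A B c g \<rho> \<tau> Y \<Lambda>" using \<open>\<theta> \<equiv> vartheta fbar A B c g \<rho> \<tau> Y \<Lambda>\<close> by simp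
  have Fd: "F = fobj fbar A B c" using \<open>F \<equiv> fobj fbar A B c\<close> by simp
  have loc: "pgm X Y \<Lambda> fbar A B c g Lf Lg \<rho> \<kappa> \<tau>"
    unfolding pgm_def using X Y Lam linA linB fbar_C1 Lf_lip g_C1 Lg_lip rho_pos kappa_pos tau
    by (auto simp: compact_imp_closed Fd LPd)
  interpret P: pgm X Y \<Lambda> fbar A B c g Lf Lg \<rho> \<kappa> \<tau> by (rule loc)
  have PF: "P.F = F" by (simp add: P.F_def Fd)
  have clX: "closed X" "closed Y" "closed \<Lambda>" using X Y Lam by (simp_all add: compact_imp_closed)
  have Qeq: "Q x1 z1 u1 v1 y1 l1 = P.Qj ((x1, z1, u1, v1), (y1, l1))" for x1 z1 u1 v1 y1 l1
    by (simp add: Qd P.Qfun_eq)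
  have theq: "\<theta> w = P.th w" for w
  proof -
    obtain x1 z1 u1 v1 where w: "w = (x1, z1, u1, v1)" by (metis prod.collapse)
    show ?thesis unfolding thd vartheta_def P.th_def w by (simp add: P.Qfun_eq)
  qed
  have T0: "T = Suc (T - 1)" using TK by simp
  have mem: "x j \<in> X \<and> z j \<in> Y \<and> y j \<in> Y \<and> lam j \<in> \<Lambda>" if "j \<le> K" for j
    using that
  proof (induction j)
    case 0 then show ?case using init by simp
  next
    case (Suc j)
    then have jK: "j < K" by simp
    have m1: "x (Suc j) \<in> X" using outer_x[OF jK] closest_point_in_set[OF clX(1) X(1)] by simp
    have m2: "z (Suc j) \<in> Y" using outer_z[OF jK] closest_point_in_set[OF clX(2) Y(1)] by simp
    have tl: "T - 1 < T" using TK by simp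
    have ey: "yin j T = yin j (Suc (T - 1))" using T0 by (rule arg_cong)
    have el: "lin j T = lin j (Suc (T - 1))" using T0 by (rule arg_cong)
    have st: "yin j (Suc (T - 1)) \<in> Y" "lin j (Suc (T - 1)) \<in> \<Lambda>"
      using inner_step[OF jK tl] closest_point_in_set[OF clX(2) Y(1)] closest_point_in_set[OF clX(3) Lam(1)]
      by simp_all
    have m3: "y (Suc j) \<in> Y" using outer_yl[OF jK] ey st(1) by simp
    have m4: "lam (Suc j) \<in> \<Lambda>" using outer_yl[OF jK] el st(2) by simp
    show ?case using m1 m2 m3 m4 by simp
  qed
  show ?thesis
  proof (intro allI impI)
    fix k assume kK: "k < K"
    define w where "w = (x k, z k, (u k, v k))"
    have mk: "x k \<in> X" "z k \<in> Y" "y k \<in> Y" "lam k \<in> \<Lambda>" using mem[of k] kK by auto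
    have gQ: "grad (\<lambda>p. Q (x k) (z k) (u k) (v k) (fst p) (snd p)) q = P.gp (w, q)" for q
    proof -
      have "(\<lambda>p. Q (x k) (z k) (u k) (v k) (fst p) (snd p)) = (\<lambda>p. P.Qj (w, p))"
        by (rule ext) (simp add: Qeq w_def)
      then show ?thesis using P.grad_Qp by simp
    qed
    define Pt where "Pt t = (yin k t, lin k t)" for t
    have Pin: "Pt t \<in> Y \<times> \<Lambda>" if "t \<le> T" for t
      using that
    proof (induction t)
      case 0 then show ?case using inner0[OF kK] mk by (simp add: Pt_def)
    next
      case (Suc t)
      then have "t < T" by simp
      then show ?case using inner_step[OF kK, of t] closest_point_in_set[OF clX(2) Y(1)]
          closest_point_in_set[OF clX(3) Lam(1)] by (simp add: Pt_def)
    qed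
    have stp: "(Pt t + \<alpha>y *\<^sub>R P.gp (w, Pt t) - Pt (Suc t)) \<bullet> (q - Pt (Suc t)) \<le> 0"
      if t: "t < T" and q: "q \<in> Y \<times> \<Lambda>" for t q
    proof -
      obtain qy ql where qe: "q = (qy, ql)" "qy \<in> Y" "ql \<in> \<Lambda>" using q by auto
      define G where "G = P.gp (w, Pt t)"
      have e: "yin k (Suc t) = closest_point Y (yin k t + \<alpha>y *\<^sub>R fst G)"
        "lin k (Suc t) = closest_point \<Lambda> (lin k t + \<alpha>y *\<^sub>R snd G)"
        using inner_step[OF kK t] gQ[of "(yin k t, lin k t)"] by (simp_all add: G_def Pt_def)
      have d1: "(yin k t + \<alpha>y *\<^sub>R fst G - yin k (Suc t)) \<bullet> (qy - yin k (Suc t)) \<le> 0"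
        unfolding e by (rule closest_point_dot[OF Y(2) clX(2) qe(2)])
      have d2: "(lin k t + \<alpha>y *\<^sub>R snd G - lin k (Suc t)) \<bullet> (ql - lin k (Suc t)) \<le> 0"
        unfolding e by (rule closest_point_dot[OF Lam(2) clX(3) qe(3)])
      show ?thesis using d1 d2 unfolding G_def[symmetric] by (simp add: Pt_def qe(1) inner_prod_def)
    qed
    have LPt: "LP + \<tau> > 0" using P.LP_nn P.tau_pos LPd by simp
    have ay1: "\<alpha>y * (P.LP + \<tau>) \<le> 1"
      using ay LPt LPd by (simp add: field_simps)
    obtain ps where ps: "ps \<in> Y \<times> \<Lambda>" "\<forall>q\<in>Y \<times> \<Lambda>. P.Qj (w, q) \<le> P.Qj (w, ps)"
      using P.max_exists by blast
    have inner: "P.th w - P.Qj (w, Pt T) \<le> (1 - \<kappa> * \<alpha>y) ^ T * (P.th w - P.Qj (w, Pt 0))"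
      unfolding w_def
      by (rule P.inner_iter[where P=Pt and n=T and uv="(u k, v k)", OF mk(1,2) ps(1) ps(2)[unfolded w_def] ay(1) ay1 Pin stp[unfolded w_def]])
    have Lthp: "Lth > 0"
    proof -
      have r: "\<rho> * Lg \<ge> 0" using rho_pos P.Lg_nn by simp
      have f1: "Lf + \<rho> * Lg + 2 * \<tau> > 0" using r P.Lf_nn P.tau_pos by linarith
      have "(Lf + 2 * \<rho> * Lg + \<tau>) / \<kappa> \<ge> 0" using P.LP_nn P.tau_pos kappa_pos by simp
      then have f2: "1 + (Lf + 2 * \<rho> * Lg + \<tau>) / \<kappa> > 0" by linarith
      show ?thesis unfolding Lthd using f1 f2 by simp
    qed
    have ax1: "\<alpha>x * Lth < 1" using ax Lthp by (simp add: field_simps)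
    have yl: "y (Suc k) = yin k T" "lam (Suc k) = lin k T" using outer_yl[OF kK] by auto
    have p0: "Pt 0 = (y k, lam k)" using inner0[OF kK] by (simp add: Pt_def)
    have pT: "Pt T = (y (Suc k), lam (Suc k))" using yl by (simp add: Pt_def)
    have phS: "(y (Suc k), lam (Suc k)) \<in> Y \<times> \<Lambda>" using Pin[of T] pT by simp
    have huv: "(u (Suc k), v (Suc k)) = (u k, v k) - \<alpha>x *\<^sub>R (\<tau> *\<^sub>R ((y (Suc k), lam (Suc k)) - (u k, v k)))"
      using outer_u[OF kK] outer_v[OF kK] by (simp add: algebra_simps)
    have os: "(1 - \<alpha>x * Lth) / (4 * \<alpha>x) * (norm ((x (Suc k), z (Suc k), (u (Suc k), v (Suc k))) - (x k, z k, (u k, v k))))\<^sup>2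
      \<le> P.th (x k, z k, (u k, v k)) - P.th (x (Suc k), z (Suc k), (u (Suc k), v (Suc k)))
        + 2 * \<alpha>x * (Lf\<^sup>2 + \<rho>\<^sup>2 * Lg\<^sup>2 + \<tau>\<^sup>2) / (\<kappa> * (1 - \<alpha>x * Lth))
          * ((1 - \<kappa> * \<alpha>y) ^ T * (P.th w - P.Qj (w, Pt 0)))"
      unfolding Lthd
      by (rule P.one_step[OF mk(1,2) phS ax(1) ax1[unfolded Lthd]])
         (use outer_x[OF kK] outer_z[OF kK] huv inner pT in \<open>simp_all add: PF w_def\<close>)
    show "(1 - \<alpha>x * Lth) / (4 * \<alpha>x) *
      (norm ((x (Suc k), z (Suc k), u (Suc k), v (Suc k)) - (x k, z k, u k, v k)))\<^sup>2
    \<le> \<theta> (x k, z k, u k, v k) - \<theta> (x (Suc k), z (Suc k), u (Suc k), v (Suc k))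
      + 2 * \<alpha>x * (Lf\<^sup>2 + \<rho>\<^sup>2 * Lg\<^sup>2 + \<tau>\<^sup>2) / (\<kappa> * (1 - \<alpha>x * Lth))
        * (1 - \<kappa> * \<alpha>y) ^ T
        * (\<theta> (x k, z k, u k, v k) - Q (x k) (z k) (u k) (v k) (y k) (lam k))"
      using os unfolding theq Qeq p0 w_def by (simp add: mult.assoc)
  qed
qed

end
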